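(* Let $\mathcal{X}\subset\mathbb{R}^d$ be a compact metric space, $\mathcal{Y}\subset\mathbb{R}$, and let $\rho$ be a probability measure on $\mathcal{X}\times\mathcal{Y}$ with marginal $\rho_{\mathcal{X}}$. Let $f^\star(x)=\mathbb{E}(Y\mid X=x)$ be bounded, let $\mathcal{H}$ be a compact, uniformly bounded subset of $C(\mathcal{X})$ with $f^\star\in\mathcal{H}$, and set $M=\max\{\|f^\star\|_\infty,\sup_{f\in\mathcal{H}}\|f\|_\infty\}$. Assume: (i) there is $\epsilon>0$ with $\mathbb{E}|Y|^{1+\epsilon}<+\infty$; (ii) there exist positive constants $q,c$ with $\log\mathcal{N}(\mathcal{H},\eta)\le c\,\eta^{-q}$ for all $\eta>0$. Let $\mathbf{z}=\{(x_i,y_i)\}_{i=1}^n$ be i.i.d. draws from $\rho$, let $\sigma=n^{\Phi(\epsilon,q)}$ with \[ \Phi(\epsilon,q)=\begin{cases}\dfrac{1}{(1+\epsilon)(1+q)}, & 0<\epsilon\le1,\\[1ex] \dfrac{1+\epsilon}{q(1+\epsilon)^2+\epsilon(\epsilon+3)}, & \epsilon>1,\end{cases} \] and suppose $\sigma>\max\{2M,1\}$. Let $f_{\mathbf{z},\sigma}=\arg\min_{f\in\mathcal{H}}\frac1n\sum_{i=1}^n\ell_\sigma(y_i-f(x_i))$. Then for any $0<\delta<1$, with probability at least $1-\delta$, \[ \|f_{\mathbf{z},\sigma}-f^\star\|_{2,\rho}^2\lesssim\log(2/\delta)\,n^{-\epsilon\Phi(\epsilon,q)}. \]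
   Context: The Huber loss with scale parameter $\sigma>0$ is $\ell_\sigma(t)=t^2$ if $|t|\le\sigma$ and $\ell_\sigma(t)=2\sigma|t|-\sigma^2$ otherwise. $\|g\|_{2,\rho}$ is the $L^2(\rho_{\mathcal{X}})$ norm. For $\eta>0$, $\mathcal{N}(\mathcal{H},\eta)$ is the minimal $k$ such that there exist $f_1,\dots,f_k\in\mathcal{H}$ with $\mathcal{H}\subset\bigcup_{j=1}^k\{f\in C(\mathcal{X}):\|f-f_j\|_\infty<\eta\}$. The notation $a\lesssim b$ means $a\le Cb$ for a positive constant $C$ independent of $n$ and $\delta$. *)

theory Defs
  imports "HOL-Probability.Probability"
begin

definition huber :: "real \<Rightarrow> real \<Rightarrow> real" where
  "huber \<sigma> t = (if \<bar>t\<bar> \<le> \<sigma> then t\<^sup>2 else 2 * \<sigma> * \<bar>t\<bar> - \<sigma>\<^sup>2)"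

definition sup_norm_on :: "'a set \<Rightarrow> ('a \<Rightarrow> real) \<Rightarrow> real" where
  "sup_norm_on X f = (SUP x\<in>X. \<bar>f x\<bar>)"

definition subset_CX :: "'a::topological_space set \<Rightarrow> ('a \<Rightarrow> real) set \<Rightarrow> bool" where
  "subset_CX X H \<longleftrightarrow> (\<forall>f\<in>H. continuous_on X f)"

definition compact_in_CX :: "'a set \<Rightarrow> ('a \<Rightarrow> real) set \<Rightarrow> bool" where
  "compact_in_CX X H \<longleftrightarrow>
     (\<forall>s. (\<forall>k. s k \<in> H) \<longrightarrow>
        (\<exists>g\<in>H. \<exists>r::nat\<Rightarrow>nat. strict_mono r \<and>
            (\<lambda>k. sup_norm_on X (\<lambda>x. s (r k) x - g x)) \<longlonglongrightarrow> 0))"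

definition uniformly_bounded_on :: "'a set \<Rightarrow> ('a \<Rightarrow> real) set \<Rightarrow> bool" where
  "uniformly_bounded_on X H \<longleftrightarrow> (\<exists>B. \<forall>f\<in>H. \<forall>x\<in>X. \<bar>f x\<bar> \<le> B)"

definition covering_number :: "'a set \<Rightarrow> ('a \<Rightarrow> real) set \<Rightarrow> real \<Rightarrow> nat" where
  "covering_number X H \<eta> =
     (LEAST k. \<exists>F. finite F \<and> card F \<le> k \<and> F \<subseteq> H \<and>
        (\<forall>f\<in>H. \<exists>g\<in>F. sup_norm_on X (\<lambda>x. f x - g x) < \<eta>))"

text \<open>f is (a version of) the regression function E(Y | X = x) under rho,
  with rho concentrated on X \<times> R: for every Borel set A,
  E[Y 1_A(X)] = E[f(X) 1_A(X)].\<close>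
definition is_regression_function ::
  "('a::euclidean_space \<times> real) measure \<Rightarrow> 'a set \<Rightarrow> ('a \<Rightarrow> real) \<Rightarrow> bool" where
  "is_regression_function \<rho> X f \<longleftrightarrow>
     (\<forall>A \<in> sets borel.
        integrable \<rho> (\<lambda>z. indicator (A \<inter> X) (fst z) * f (fst z)) \<and>
        (LINT z|\<rho>. indicator A (fst z) * snd z) =
        (LINT z|\<rho>. indicator (A \<inter> X) (fst z) * f (fst z)))"

definition Phi :: "real \<Rightarrow> real \<Rightarrow> real" where
  "Phi \<epsilon> q = (if \<epsilon> \<le> 1 then 1 / ((1 + \<epsilon>) * (1 + q))
               else (1 + \<epsilon>) / (q * (1 + \<epsilon>)\<^sup>2 + \<epsilon> * (\<epsilon> + 3)))"

definition emp_risk :: "real \<Rightarrow> nat \<Rightarrow> (nat \<Rightarrow> 'a \<times> real) \<Rightarrow> ('a \<Rightarrow> real) \<Rightarrow> real" where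
  "emp_risk \<sigma> n z f = (1 / real n) * (\<Sum>i<n. huber \<sigma> (snd (z i) - f (fst (z i))))"

end

theory Submission
  imports Defs
begin

lemma exp_le_quad:
  fixes x :: real assumes "x \<le> 1" shows "exp x \<le> 1 + x + x\<^sup>2"
proof (cases "x \<ge> 0")
  case True thus ?thesis using exp_bound assms by auto
next
  case False
  hence y: "-x \<ge> 0" by simp
  have e: "1 + (-x) + (-x)\<^sup>2 / 2 \<le> exp (-x)" by (rule exp_lower_Taylor_quadratic[OF y])
  have pos: "1 + (-x) + (-x)\<^sup>2 / 2 > 0" using y by (simp add: add_pos_nonneg)
  have "exp x = 1 / exp (-x)" by (simp add: exp_minus field_simps)
  also have "\<dots> \<le> 1 / (1 + (-x) + (-x)\<^sup>2 / 2)"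
    by (rule divide_left_mono[OF e]) (use pos in auto)
  also have "\<dots> \<le> 1 + x + x\<^sup>2"
  proof -
    have "(1 + x + x\<^sup>2) * (1 + (-x) + (-x)\<^sup>2 / 2) \<ge> 1"
    proof -
      have "(1 + x + x\<^sup>2) * (1 + (-x) + (-x)\<^sup>2 / 2) = 1 + x\<^sup>2/2 - x^3/2 + x^4/2"
        by (simp add: field_simps power2_eq_square power3_eq_cube power4_eq_xxxx)
      moreover have "x^3 \<le> 0"
      proof -
        have "x^3 = x\<^sup>2 * x" by (simp add: power2_eq_square power3_eq_cube)
        thus ?thesis using mult_nonneg_nonpos[of "x\<^sup>2" x] False by simp
      qed
      moreover have "x^4 \<ge> 0" by (simp add: zero_le_even_power)
      moreover have "x\<^sup>2 \<ge> 0" by simp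
      ultimately show ?thesis by linarith
    qed
    thus ?thesis using pos by (simp add: divide_le_eq mult.commute)
  qed
  finally show ?thesis .
qed

lemma huber_alt: "huber s t = t\<^sup>2 - (max (\<bar>t\<bar> - s) 0)\<^sup>2"
  by (auto simp: huber_def power2_eq_square algebra_simps max_def abs_mult_self_eq)

lemma huber_lip:
  assumes s: "s > 0"
  shows "\<bar>huber s a - huber s b\<bar> \<le> 2 * \<bar>a - b\<bar> * max (min \<bar>a\<bar> s) (min \<bar>b\<bar> s)"
proof -
  have sq: "\<bar>a\<^sup>2 - b\<^sup>2\<bar> \<le> \<bar>a - b\<bar> * (\<bar>a\<bar> + \<bar>b\<bar>)"
  proof -
    have "\<bar>a\<^sup>2 - b\<^sup>2\<bar> = \<bar>a - b\<bar> * \<bar>a + b\<bar>" by (simp add: power2_eq_square algebra_simps abs_mult[symmetric])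
    also have "\<dots> \<le> \<bar>a - b\<bar> * (\<bar>a\<bar> + \<bar>b\<bar>)" by (intro mult_left_mono abs_triangle_ineq) auto
    finally show ?thesis .
  qed
  have ab: "\<bar>\<bar>a\<bar> - \<bar>b\<bar>\<bar> \<le> \<bar>a - b\<bar>" by (rule abs_triangle_ineq3) 
  show ?thesis
  proof (cases "\<bar>a\<bar> \<le> s"; cases "\<bar>b\<bar> \<le> s")
    assume A: "\<bar>a\<bar> \<le> s" and B: "\<bar>b\<bar> \<le> s"
    hence "huber s a - huber s b = a\<^sup>2 - b\<^sup>2" by (simp add: huber_def)
    moreover have "\<bar>a - b\<bar> * (\<bar>a\<bar> + \<bar>b\<bar>) \<le> 2 * \<bar>a - b\<bar> * max (min \<bar>a\<bar> s) (min \<bar>b\<bar> s)"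
    proof -
      have "\<bar>a\<bar> + \<bar>b\<bar> \<le> 2 * max (min \<bar>a\<bar> s) (min \<bar>b\<bar> s)" using A B by (simp add: min_def max_def)
      hence "\<bar>a - b\<bar> * (\<bar>a\<bar> + \<bar>b\<bar>) \<le> \<bar>a - b\<bar> * (2 * max (min \<bar>a\<bar> s) (min \<bar>b\<bar> s))"
        by (intro mult_left_mono) auto
      thus ?thesis by (simp add: mult_ac)
    qed
    ultimately show ?thesis using sq by linarith
  next
    assume A: "\<not> \<bar>a\<bar> \<le> s" and B: "\<not> \<bar>b\<bar> \<le> s"
    hence "huber s a - huber s b = 2 * s * (\<bar>a\<bar> - \<bar>b\<bar>)" by (simp add: huber_def algebra_simps)
    moreover have "max (min \<bar>a\<bar> s) (min \<bar>b\<bar> s) = s" using A B by simp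
    ultimately show ?thesis using ab s by (simp add: abs_mult mult_left_mono)
  next
    assume A: "\<bar>a\<bar> \<le> s" and B: "\<not> \<bar>b\<bar> \<le> s"
    hence e: "huber s b - huber s a = 2 * s * \<bar>b\<bar> - s\<^sup>2 - a\<^sup>2" by (simp add: huber_def)
    have m: "max (min \<bar>a\<bar> s) (min \<bar>b\<bar> s) = s" using A B by simp
    have "a\<^sup>2 = \<bar>a\<bar>\<^sup>2" by simp
    have "0 \<le> (s - \<bar>a\<bar>)\<^sup>2" by simp
    hence "2 * s * \<bar>b\<bar> - s\<^sup>2 - a\<^sup>2 \<le> 2 * s * (\<bar>b\<bar> - \<bar>a\<bar>)" by (simp add: power2_eq_square algebra_simps)
    also have "\<dots> \<le> 2 * s * \<bar>a - b\<bar>" using s ab by (intro mult_left_mono) auto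
    finally have u: "2 * s * \<bar>b\<bar> - s\<^sup>2 - a\<^sup>2 \<le> 2 * s * \<bar>a - b\<bar>" .
    have "a\<^sup>2 \<le> s\<^sup>2" using power_mono[OF A abs_ge_zero, of 2] by simp
    moreover have "s\<^sup>2 \<le> s * \<bar>b\<bar>" using B s by (simp add: power2_eq_square)
    ultimately have l: "0 \<le> 2 * s * \<bar>b\<bar> - s\<^sup>2 - a\<^sup>2" by linarith
    have "\<bar>huber s a - huber s b\<bar> = 2 * s * \<bar>b\<bar> - s\<^sup>2 - a\<^sup>2" using e l by (simp add: abs_minus_commute)
    moreover have "2 * s * \<bar>a - b\<bar> = 2 * \<bar>a - b\<bar> * s" by (simp add: mult.commute mult.left_commute)
    ultimately show ?thesis unfolding m using u by linarith
  next
    assume A: "\<not> \<bar>a\<bar> \<le> s" and B: "\<bar>b\<bar> \<le> s"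
    hence e: "huber s a - huber s b = 2 * s * \<bar>a\<bar> - s\<^sup>2 - b\<^sup>2" by (simp add: huber_def)
    have m: "max (min \<bar>a\<bar> s) (min \<bar>b\<bar> s) = s" using A B by simp
    have "0 \<le> (s - \<bar>b\<bar>)\<^sup>2" by simp
    hence "2 * s * \<bar>a\<bar> - s\<^sup>2 - b\<^sup>2 \<le> 2 * s * (\<bar>a\<bar> - \<bar>b\<bar>)" by (simp add: power2_eq_square algebra_simps)
    also have "\<dots> \<le> 2 * s * \<bar>a - b\<bar>" using s ab by (intro mult_left_mono) auto
    finally have u: "2 * s * \<bar>a\<bar> - s\<^sup>2 - b\<^sup>2 \<le> 2 * s * \<bar>a - b\<bar>" .
    have "b\<^sup>2 \<le> s\<^sup>2" using power_mono[OF B abs_ge_zero, of 2] by simp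
    moreover have "s\<^sup>2 \<le> s * \<bar>a\<bar>" using A s by (simp add: power2_eq_square)
    ultimately have l: "0 \<le> 2 * s * \<bar>a\<bar> - s\<^sup>2 - b\<^sup>2" by linarith
    have "\<bar>huber s a - huber s b\<bar> = 2 * s * \<bar>a\<bar> - s\<^sup>2 - b\<^sup>2" using e l by simp
    moreover have "2 * s * \<bar>a - b\<bar> = 2 * \<bar>a - b\<bar> * s" by (simp add: mult.commute mult.left_commute)
    ultimately show ?thesis unfolding m using u by linarith
  qed
qed

lemma huber_sq_diff:
  shows "\<bar>(huber s a - huber s b) - (a\<^sup>2 - b\<^sup>2)\<bar> \<le> 2 * \<bar>a - b\<bar> * max (max (\<bar>a\<bar> - s) (\<bar>b\<bar> - s)) 0"
proof -
  define u where "u = max (\<bar>a\<bar> - s) 0"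
  define w where "w = max (\<bar>b\<bar> - s) 0"
  have "(huber s a - huber s b) - (a\<^sup>2 - b\<^sup>2) = w\<^sup>2 - u\<^sup>2" by (simp add: huber_alt u_def w_def)
  also have "\<dots> = (w - u) * (w + u)" by (simp add: power2_eq_square algebra_simps)
  finally have e: "\<bar>(huber s a - huber s b) - (a\<^sup>2 - b\<^sup>2)\<bar> = \<bar>w - u\<bar> * (w + u)"
    by (simp add: abs_mult u_def w_def)
  have wu: "\<bar>w - u\<bar> \<le> \<bar>a - b\<bar>" unfolding u_def w_def
    using abs_triangle_ineq3[of a b] by (simp add: max_def abs_if split: if_splits) 
  have wu2: "w + u \<le> 2 * max (max (\<bar>a\<bar> - s) (\<bar>b\<bar> - s)) 0" unfolding u_def w_def by (simp add: max_def)
  have wu0: "0 \<le> w + u" by (simp add: u_def w_def)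
  have "\<bar>w - u\<bar> * (w + u) \<le> \<bar>a - b\<bar> * (2 * max (max (\<bar>a\<bar> - s) (\<bar>b\<bar> - s)) 0)"
    by (rule mult_mono[OF wu wu2 abs_ge_zero wu0])
  moreover have "\<bar>a - b\<bar> * (2 * max (max (\<bar>a\<bar> - s) (\<bar>b\<bar> - s)) 0) = 2 * \<bar>a - b\<bar> * max (max (\<bar>a\<bar> - s) (\<bar>b\<bar> - s)) 0"
    by simp
  ultimately show ?thesis unfolding e by linarith
qed

lemma mgf_bound:
  assumes N: "prob_space N" and hm[measurable]: "h \<in> borel_measurable N"
    and hb: "\<And>z. z \<in> space N \<Longrightarrow> \<bar>h z\<bar> \<le> b"
    and h0: "integral\<^sup>L N h = 0" and hv: "integral\<^sup>L N (\<lambda>z. (h z)\<^sup>2) \<le> v"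
    and l: "0 < l" "l * b \<le> 1"
  shows "(\<integral>\<^sup>+z. ennreal (exp (l * h z)) \<partial>N) \<le> ennreal (exp (l\<^sup>2 * v))"
proof -
  interpret prob_space N by fact
  have b0: "0 \<le> b" using hb[of "SOME z. z \<in> space N"] not_empty some_in_eq by fastforce
  have ih: "integrable N h" by (rule integrable_const_bound[where B=b]) (use hb in auto)
  have ih2: "integrable N (\<lambda>z. (h z)\<^sup>2)"
  proof (rule integrable_const_bound[where B="b\<^sup>2"])
    have "(h z)\<^sup>2 \<le> b\<^sup>2" if "z \<in> space N" for z
      using power_mono[OF hb[OF that] abs_ge_zero, of 2] by simp
    thus "AE z in N. norm ((h z)\<^sup>2) \<le> b\<^sup>2" by (intro AE_I2) simp
  qed simp
  have ie: "integrable N (\<lambda>z. exp (l * h z))"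
  proof (rule integrable_const_bound[where B="exp (l*b)"])
    have "exp (l * h z) \<le> exp (l * b)" if "z \<in> space N" for z
      using hb[OF that] l by (auto intro!: mult_left_mono simp: abs_le_iff)
    thus "AE z in N. norm (exp (l * h z)) \<le> exp (l * b)" by (intro AE_I2) simp
  qed simp
  have "(\<integral>\<^sup>+z. ennreal (exp (l * h z)) \<partial>N) = ennreal (integral\<^sup>L N (\<lambda>z. exp (l * h z)))"
    by (rule nn_integral_eq_integral[OF ie]) auto
  also have "integral\<^sup>L N (\<lambda>z. exp (l * h z)) \<le> integral\<^sup>L N (\<lambda>z. 1 + l * h z + l\<^sup>2 * (h z)\<^sup>2)"
  proof (rule integral_mono[OF ie])
    show "integrable N (\<lambda>z. 1 + l * h z + l\<^sup>2 * (h z)\<^sup>2)" using ih ih2 by auto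
    fix z assume z: "z \<in> space N"
    have "l * h z \<le> l * b" using hb[OF z] l by (intro mult_left_mono) auto
    hence "l * h z \<le> 1" using l by linarith
    from exp_le_quad[OF this] show "exp (l * h z) \<le> 1 + l * h z + l\<^sup>2 * (h z)\<^sup>2"
      by (simp add: power_mult_distrib)
  qed
  also have "\<dots> = 1 + l * integral\<^sup>L N h + l\<^sup>2 * integral\<^sup>L N (\<lambda>z. (h z)\<^sup>2)"
    using ih ih2 by (simp add: prob_space)
  also have "\<dots> \<le> 1 + l\<^sup>2 * v" using h0 hv by (simp add: mult_left_mono)
  also have "\<dots> \<le> exp (l\<^sup>2 * v)" by (rule exp_ge_add_one_self)
  finally show ?thesis by (simp add: ennreal_leI)
qed

lemma bernstein_PiM:
  assumes N: "prob_space N" and hm[measurable]: "h \<in> borel_measurable N"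
    and hb: "\<And>z. z \<in> space N \<Longrightarrow> \<bar>h z\<bar> \<le> b" and b: "b > 0"
    and h0: "integral\<^sup>L N h = 0" and hv: "integral\<^sup>L N (\<lambda>z. (h z)\<^sup>2) \<le> v"
    and L: "L > 0"
  shows "measure (PiM {..<n} (\<lambda>_. N))
     {\<omega> \<in> space (PiM {..<n} (\<lambda>_. N)). (\<Sum>i<n. h (\<omega> i)) \<ge> 2 * sqrt (real n * v * L) + 2 * b * L}
     \<le> exp (- L)"
proof -
  interpret prob_space N by fact
  interpret PP: product_prob_space "\<lambda>_. N" "{..<n}"
    by unfold_locales
  have v0: "0 \<le> v"
  proof -
    have "0 \<le> integral\<^sup>L N (\<lambda>z. (h z)\<^sup>2)" by (rule integral_nonneg_AE) simp
    thus ?thesis using hv by linarith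
  qed
  let ?P = "PiM {..<n} (\<lambda>_. N)"
  let ?a = "2 * sqrt (real n * v * L) + 2 * b * L"
  have key: "measure ?P {\<omega> \<in> space ?P. (\<Sum>i<n. h (\<omega> i)) \<ge> ?a} \<le> exp (- (l * ?a) + real n * l\<^sup>2 * v)"
    if l: "0 < l" "l * b \<le> 1" for l
  proof -
    have "emeasure ?P {\<omega> \<in> space ?P. (\<Sum>i<n. h (\<omega> i)) \<ge> ?a} \<le>
       ennreal (exp (-l * ?a)) * (\<integral>\<^sup>+\<omega>. ennreal (exp (l * (\<Sum>i<n. h (\<omega> i)))) * indicator (space ?P) \<omega> \<partial>?P)"
      by (rule Chernoff_ineq_nn_integral_ge) (use l in auto)
    also have "(\<integral>\<^sup>+\<omega>. ennreal (exp (l * (\<Sum>i<n. h (\<omega> i)))) * indicator (space ?P) \<omega> \<partial>?P)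
        = (\<integral>\<^sup>+\<omega>. (\<Prod>i\<in>{..<n}. ennreal (exp (l * h (\<omega> i)))) \<partial>?P)"
      by (intro nn_integral_cong) (simp add: sum_distrib_left exp_sum prod_ennreal)
    also have "\<dots> = (\<Prod>i\<in>{..<n}. \<integral>\<^sup>+z. ennreal (exp (l * h z)) \<partial>N)"
      by (rule PP.product_nn_integral_prod) auto
    also have "ennreal (exp (-l * ?a)) * (\<Prod>i\<in>{..<n}. \<integral>\<^sup>+z. ennreal (exp (l * h z)) \<partial>N)
        \<le> ennreal (exp (-l * ?a)) * (\<Prod>i\<in>{..<n}. ennreal (exp (l\<^sup>2 * v)))"
      by (intro mult_left_mono prod_mono_ennreal mgf_bound[OF N hm hb h0 hv l]) auto
    also have "ennreal (exp (-l * ?a)) * (\<Prod>i\<in>{..<n}. ennreal (exp (l\<^sup>2 * v))) = ennreal (exp (- (l * ?a) + real n * l\<^sup>2 * v))"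
    proof -
      have "(\<Prod>i\<in>{..<n}. ennreal (exp (l\<^sup>2 * v))) = ennreal (exp (real n * (l\<^sup>2 * v)))"
        by (simp add: prod_ennreal exp_of_nat_mult ennreal_power)
      hence "ennreal (exp (-l * ?a)) * (\<Prod>i\<in>{..<n}. ennreal (exp (l\<^sup>2 * v)))
          = ennreal (exp (-l * ?a) * exp (real n * (l\<^sup>2 * v)))"
        by (simp add: ennreal_mult)
      also have "exp (-l * ?a) * exp (real n * (l\<^sup>2 * v)) = exp (- (l * ?a) + real n * l\<^sup>2 * v)"
        by (simp add: exp_add[symmetric] mult.assoc)
      finally show ?thesis .
    qed
    finally show ?thesis by (simp add: PP.P.emeasure_eq_measure ennreal_le_iff)
  qed
  show ?thesis
  proof (cases "real n * v < b\<^sup>2 * L")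
    case True
    have "measure ?P {\<omega> \<in> space ?P. (\<Sum>i<n. h (\<omega> i)) \<ge> ?a} \<le> exp (- ((1/b) * ?a) + real n * (1/b)\<^sup>2 * v)"
      by (rule key) (use b in auto)
    also have "\<dots> \<le> exp (- L)"
    proof -
      have "real n * (1/b)\<^sup>2 * v = (real n * v) / b\<^sup>2" by (simp add: power2_eq_square field_simps)
      also have "\<dots> \<le> L" using True b by (simp add: field_simps)
      finally have 1: "real n * (1/b)\<^sup>2 * v \<le> L" .
      have "(1/b) * ?a \<ge> (1/b) * (2 * b * L)" using b v0 L by (intro mult_left_mono) auto
      hence "(1/b) * ?a \<ge> 2 * L" using b by simp
      with 1 show ?thesis by simp
    qed
    finally show ?thesis .
  next
    case False
    hence nv: "real n * v > 0" using b L by (smt (verit) mult_pos_pos zero_less_power)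
    define l where "l = sqrt (L / (real n * v))"
    have l0: "l > 0" using nv L by (simp add: l_def)
    have lb: "l * b \<le> 1"
    proof -
      have "L / (real n * v) \<le> 1 / b\<^sup>2" using False nv b by (simp add: field_simps)
      hence "l \<le> sqrt (1 / b\<^sup>2)" unfolding l_def by (rule real_sqrt_le_mono)
      also have "\<dots> = 1 / b" using b by (simp add: real_sqrt_divide)
      finally show ?thesis using b by (simp add: field_simps)
    qed
    have "measure ?P {\<omega> \<in> space ?P. (\<Sum>i<n. h (\<omega> i)) \<ge> ?a} \<le> exp (- (l * ?a) + real n * l\<^sup>2 * v)"
      by (rule key[OF l0 lb])
    also have "\<dots> \<le> exp (- L)"
    proof -
      have l2: "l\<^sup>2 = L / (real n * v)" unfolding l_def using L nv by simp
      have 1: "real n * l\<^sup>2 * v = L"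
      proof -
        have "real n * l\<^sup>2 * v = (real n * v) * (L / (real n * v))" unfolding l2[symmetric] by (simp add: mult_ac)
        also have "\<dots> = L"
        proof -
          have "real n \<noteq> 0" "v \<noteq> 0" using nv by (metis mult_eq_0_iff less_irrefl)+
          thus ?thesis by (simp add: field_simps)
        qed
        finally show ?thesis .
      qed
      have "l * sqrt (real n * v * L) = sqrt (l\<^sup>2 * (real n * v * L))" using l0 by (simp add: real_sqrt_mult)
      also have "\<dots> = L"
      proof -
        have "l\<^sup>2 * (real n * v * L) = (real n * l\<^sup>2 * v) * L" by (simp add: mult_ac)
        also have "\<dots> = L * L" by (simp only: 1)
        finally have e: "l\<^sup>2 * (real n * v * L) = L * L" .
        show ?thesis unfolding e using L by simp
      qed
      finally have ls: "l * sqrt (real n * v * L) = L" .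
      have "l * (2 * b * L) \<ge> 0" using l0 b L by simp
      moreover have "l * ?a = 2 * (l * sqrt (real n * v * L)) + l * (2 * b * L)" by (simp add: distrib_left)
      ultimately have "l * ?a \<ge> 2 * L" unfolding ls by linarith
      with 1 show ?thesis by simp
    qed
    finally show ?thesis .
  qed
qed

lemma meas_rho:
  fixes \<rho> :: "('a::euclidean_space \<times> real) measure"
  assumes "sets \<rho> = sets borel"
  shows "measurable \<rho> N = measurable (borel \<Otimes>\<^sub>M borel) N"
  by (rule measurable_cong_sets) (metis assms borel_prod, rule refl)

lemma zero_integral_ext:
  fixes \<rho> :: "('a::euclidean_space \<times> real) measure" and \<phi> :: "'a \<times> real \<Rightarrow> real"
  assumes P: "prob_space \<rho>" and sets_rho: "sets \<rho> = sets borel"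
    and phi_int: "integrable \<rho> \<phi>"
    and zero: "\<And>A. A \<in> sets borel \<Longrightarrow> (LINT z|\<rho>. indicator A (fst z) * \<phi> z) = 0"
    and gm[measurable]: "g \<in> borel_measurable borel" and gb: "\<And>x. \<bar>g x\<bar> \<le> G"
  shows "(LINT z|\<rho>. g (fst z) * \<phi> z) = 0"
proof -
  interpret prob_space \<rho> by fact
  have fstm[measurable]: "fst \<in> measurable \<rho> borel"
    by (simp add: meas_rho[OF sets_rho])
  have phim[measurable]: "\<phi> \<in> borel_measurable \<rho>" using phi_int by auto
  have pw: "norm (g (fst z) * \<phi> z) \<le> norm (G * \<phi> z)" for z
  proof -
    have "\<bar>g (fst z)\<bar> \<le> \<bar>G\<bar>" using gb[of "fst z"] by linarith
    thus ?thesis by (simp add: abs_mult mult_right_mono)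
  qed
  have gint: "integrable \<rho> (\<lambda>z. g (fst z) * \<phi> z)"
  proof -
    have ae: "AE z in \<rho>. norm (g (fst z) * \<phi> z) \<le> norm (G * \<phi> z)"
      by (intro AE_I2 pw)
    have i: "integrable \<rho> (\<lambda>z. G * \<phi> z)" using phi_int by simp
    show ?thesis
      by (rule Bochner_Integration.integrable_bound[OF i _ ae]) simp
  qed
  define I where "I = (LINT z|\<rho>. \<bar>\<phi> z\<bar>)"
  have bnd: "\<bar>LINT z|\<rho>. g (fst z) * \<phi> z\<bar> \<le> I / real (Suc m)" for m
  proof -
    define k where "k = real (Suc m)"
    have k: "k > 0" "k \<ge> 1" by (auto simp: k_def)
    define K where "K = nat (\<lceil>k * G\<rceil> + 1)"
    define gk where "gk = (\<lambda>x. real_of_int \<lfloor>k * g x\<rfloor> / k)"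
    have rng: "\<lfloor>k * g x\<rfloor> \<in> {- int K..int K}" for x
    proof -
      have "\<bar>k * g x\<bar> \<le> k * G" using gb[of x] k by (simp add: abs_mult mult_left_mono)
      hence "- (k*G) \<le> k * g x" "k * g x \<le> k * G" by linarith+
      hence "\<lfloor>k * g x\<rfloor> \<le> \<lceil>k * G\<rceil> + 1" "- (\<lceil>k * G\<rceil> + 1) \<le> \<lfloor>k * g x\<rfloor>"
        by linarith+
      moreover have "0 \<le> \<lceil>k * G\<rceil> + 1"
      proof -
        have "0 \<le> G" using gb[of x] abs_ge_zero[of "g x"] by linarith
        hence "0 \<le> k * G" using k by simp
        thus ?thesis by linarith
      qed
      ultimately show ?thesis by (simp add: K_def)
    qed
    have rep: "gk x = (\<Sum>j\<in>{- int K..int K}. (real_of_int j / k) * indicator {x. \<lfloor>k * g x\<rfloor> = j} x)" for x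
    proof -
      have "(\<Sum>j\<in>{- int K..int K}. (real_of_int j / k) * indicator {x. \<lfloor>k * g x\<rfloor> = j} x)
          = (\<Sum>j\<in>{- int K..int K}. if j = \<lfloor>k * g x\<rfloor> then real_of_int j / k else 0)"
        by (intro sum.cong) (auto simp: indicator_def)
      also have "\<dots> = real_of_int \<lfloor>k * g x\<rfloor> / k" using rng[of x] by (simp add: sum.delta')
      finally show ?thesis by (simp add: gk_def)
    qed
    have Am: "{x. \<lfloor>k * g x\<rfloor> = j} \<in> sets borel" for j
      by measurable
    have ind_int: "integrable \<rho> (\<lambda>z. indicator A (fst z) * \<phi> z)" if "A \<in> sets borel" for A
      by (rule Bochner_Integration.integrable_bound[OF phi_int])
         (use that in \<open>auto simp: indicator_def\<close>)
    have "(LINT z|\<rho>. gk (fst z) * \<phi> z)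
       = (LINT z|\<rho>. (\<Sum>j\<in>{- int K..int K}. (real_of_int j / k) * (indicator {x. \<lfloor>k * g x\<rfloor> = j} (fst z) * \<phi> z)))"
      by (intro Bochner_Integration.integral_cong refl) (simp only: rep sum_distrib_right mult.assoc)
    also have "\<dots> = (\<Sum>j\<in>{- int K..int K}. (real_of_int j / k) * (LINT z|\<rho>. indicator {x. \<lfloor>k * g x\<rfloor> = j} (fst z) * \<phi> z))"
      by (subst Bochner_Integration.integral_sum) (auto intro!: ind_int[OF Am])
    also have "\<dots> = 0" using zero[OF Am] by simp
    finally have z0: "(LINT z|\<rho>. gk (fst z) * \<phi> z) = 0" .
    have gkm[measurable]: "gk \<in> borel_measurable borel" unfolding gk_def by measurable
    have gkint: "integrable \<rho> (\<lambda>z. gk (fst z) * \<phi> z)"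
    proof (rule Bochner_Integration.integrable_bound[of _ "\<lambda>z. (G + 1) * \<phi> z"])
      show "integrable \<rho> (\<lambda>z. (G + 1) * \<phi> z)" using phi_int by simp
      have "norm (gk (fst z) * \<phi> z) \<le> norm ((G + 1) * \<phi> z)" for z
      proof -
        have "\<bar>gk (fst z)\<bar> \<le> G + 1"
        proof -
          have "\<bar>k * g (fst z)\<bar> \<le> k * G" using gb[of "fst z"] k by (simp add: abs_mult mult_left_mono)
          hence "\<bar>real_of_int \<lfloor>k * g (fst z)\<rfloor>\<bar> \<le> k * G + 1" by linarith
          also have "\<dots> \<le> k * (G + 1)" using k by (simp add: algebra_simps)
          finally have j: "\<bar>real_of_int \<lfloor>k * g (fst z)\<rfloor>\<bar> \<le> (G + 1) * k" by (simp only: mult.commute)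
          have "\<bar>gk (fst z)\<bar> = \<bar>real_of_int \<lfloor>k * g (fst z)\<rfloor>\<bar> / k" unfolding gk_def using k by (simp add: abs_divide)
          thus ?thesis using j pos_divide_le_eq[OF k(1)] by simp
        qed
        moreover have "0 \<le> G + 1" using gb[of 0] by linarith
        ultimately show "norm (gk (fst z) * \<phi> z) \<le> norm ((G + 1) * \<phi> z)"
          by (simp add: abs_mult mult_right_mono)
      qed
      thus "AE z in \<rho>. norm (gk (fst z) * \<phi> z) \<le> norm ((G + 1) * \<phi> z)" by (intro AE_I2)
    qed simp
    have diff: "\<bar>g x - gk x\<bar> \<le> 1 / k" for x
    proof -
      have e: "g x - gk x = (k * g x - real_of_int \<lfloor>k * g x\<rfloor>) / k" using k by (simp add: gk_def field_simps)
      have f1: "0 \<le> k * g x - real_of_int \<lfloor>k * g x\<rfloor>" "k * g x - real_of_int \<lfloor>k * g x\<rfloor> \<le> 1" by linarith+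
      have "0 \<le> g x - gk x" unfolding e using f1 k by simp
      moreover have "g x - gk x \<le> 1 / k" unfolding e using f1 k by (intro divide_right_mono) auto
      ultimately show ?thesis by simp
    qed
    have "(LINT z|\<rho>. g (fst z) * \<phi> z) = (LINT z|\<rho>. g (fst z) * \<phi> z) - (LINT z|\<rho>. gk (fst z) * \<phi> z)"
      using z0 by simp
    also have "\<dots> = (LINT z|\<rho>. (g (fst z) - gk (fst z)) * \<phi> z)"
      using gint gkint by (simp add: left_diff_distrib)
    finally have "\<bar>LINT z|\<rho>. g (fst z) * \<phi> z\<bar> = \<bar>LINT z|\<rho>. (g (fst z) - gk (fst z)) * \<phi> z\<bar>" by simp
    also have "\<dots> \<le> (LINT z|\<rho>. \<bar>(g (fst z) - gk (fst z)) * \<phi> z\<bar>)"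
      by (rule integral_abs_bound)
    also have "\<dots> \<le> (LINT z|\<rho>. (1 / k) * \<bar>\<phi> z\<bar>)"
    proof (rule integral_mono)
      show "integrable \<rho> (\<lambda>z. \<bar>(g (fst z) - gk (fst z)) * \<phi> z\<bar>)"
        using gint gkint by (intro integrable_abs Bochner_Integration.integrable_diff) (auto simp: left_diff_distrib)
      show "integrable \<rho> (\<lambda>z. (1 / k) * \<bar>\<phi> z\<bar>)" using phi_int by auto
      fix z show "\<bar>(g (fst z) - gk (fst z)) * \<phi> z\<bar> \<le> (1 / k) * \<bar>\<phi> z\<bar>"
        using mult_right_mono[OF diff[of "fst z"] abs_ge_zero[of "\<phi> z"]] by (simp add: abs_mult)
    qed
    also have "\<dots> = I / k" by (simp add: I_def)
    finally show ?thesis by (simp add: k_def)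
  qed
  have lim: "(\<lambda>m. I / real (Suc m)) \<longlonglongrightarrow> 0"
    using LIMSEQ_Suc[OF lim_const_over_n[of I]] by simp
  have "\<bar>LINT z|\<rho>. g (fst z) * \<phi> z\<bar> \<le> 0"
    by (rule LIMSEQ_le[OF tendsto_const lim]) (use bnd in auto)
  thus ?thesis by simp
qed

primrec build :: "('f list \<Rightarrow> 'f) \<Rightarrow> nat \<Rightarrow> 'f list" where
  "build ch 0 = []"
| "build ch (Suc n) = ch (build ch n) # build ch n"

lemma set_build: "set (build ch n) = (\<lambda>j. ch (build ch j)) ` {..<n}"
  by (induction n) (auto simp: lessThan_Suc)

lemma sup_norm_ge:
  assumes "\<And>x. x \<in> X \<Longrightarrow> \<bar>f x\<bar> \<le> B" "x \<in> X"
  shows "\<bar>f x\<bar> \<le> sup_norm_on X f"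
  unfolding sup_norm_on_def using assms by (intro cSUP_upper) (auto intro!: bdd_aboveI2)

lemma sup_norm_le:
  assumes "X \<noteq> {}" "\<And>x. x \<in> X \<Longrightarrow> \<bar>f x\<bar> \<le> s"
  shows "sup_norm_on X f \<le> s"
  unfolding sup_norm_on_def using assms by (intro cSUP_least) auto

lemma finite_cover_exists:
  assumes X: "X \<noteq> {}" and B: "\<And>f x. f \<in> H \<Longrightarrow> x \<in> X \<Longrightarrow> \<bar>f x\<bar> \<le> B"
    and C: "compact_in_CX X H" and eta: "\<eta> > 0"
  shows "\<exists>F. finite F \<and> F \<subseteq> H \<and> (\<forall>f\<in>H. \<exists>g\<in>F. sup_norm_on X (\<lambda>x. f x - g x) < \<eta>)"
proof (rule ccontr)
  assume nc: "\<not> ?thesis"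
  have dB: "\<bar>f x - g x\<bar> \<le> 2 * B" if "f \<in> H" "g \<in> H" "x \<in> X" for f g x
    using B[OF that(1,3)] B[OF that(2,3)] by linarith
  have ex: "\<exists>f. f \<in> H \<and> (\<forall>g\<in>set l. sup_norm_on X (\<lambda>x. f x - g x) \<ge> \<eta>)" if "set l \<subseteq> H" for l
    using nc that by (metis List.finite_set not_less)
  define ch where "ch = (\<lambda>l. SOME f. f \<in> H \<and> (\<forall>g\<in>set l. sup_norm_on X (\<lambda>x. f x - g x) \<ge> \<eta>))"
  define s where "s = (\<lambda>n. ch (build ch n))"
  have sH: "s n \<in> H \<and> (\<forall>j<n. sup_norm_on X (\<lambda>x. s n x - s j x) \<ge> \<eta>)" for n
  proof (induction n rule: less_induct)
    case (less n)
    have "set (build ch n) \<subseteq> H" using less by (auto simp: set_build s_def)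
    from someI_ex[OF ex[OF this]] have "s n \<in> H \<and> (\<forall>g\<in>set (build ch n). sup_norm_on X (\<lambda>x. s n x - g x) \<ge> \<eta>)"
      by (simp add: s_def ch_def)
    thus ?case by (auto simp: set_build s_def)
  qed
  from C[unfolded compact_in_CX_def, rule_format, of s] sH obtain g r where
    g: "g \<in> H" and r: "strict_mono r" and lim: "(\<lambda>k. sup_norm_on X (\<lambda>x. s (r k) x - g x)) \<longlonglongrightarrow> 0"
    by blast
  from lim have "\<forall>\<^sub>F k in sequentially. sup_norm_on X (\<lambda>x. s (r k) x - g x) < \<eta> / 2"
    using eta by (intro order_tendstoD) auto
  then obtain K where K: "\<And>k. k \<ge> K \<Longrightarrow> sup_norm_on X (\<lambda>x. s (r k) x - g x) < \<eta> / 2"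
    unfolding eventually_sequentially by blast
  have "sup_norm_on X (\<lambda>x. s (r (Suc K)) x - s (r K) x) \<le>
      sup_norm_on X (\<lambda>x. s (r (Suc K)) x - g x) + sup_norm_on X (\<lambda>x. s (r K) x - g x)"
  proof (rule sup_norm_le[OF X])
    fix x assume x: "x \<in> X"
    have "\<bar>s (r (Suc K)) x - g x\<bar> \<le> sup_norm_on X (\<lambda>x. s (r (Suc K)) x - g x)"
      by (rule sup_norm_ge[OF _ x]) (use dB sH g in auto)
    moreover have "\<bar>s (r K) x - g x\<bar> \<le> sup_norm_on X (\<lambda>x. s (r K) x - g x)"
      by (rule sup_norm_ge[OF _ x]) (use dB sH g in auto)
    ultimately show "\<bar>s (r (Suc K)) x - s (r K) x\<bar> \<le> sup_norm_on X (\<lambda>x. s (r (Suc K)) x - g x) + sup_norm_on X (\<lambda>x. s (r K) x - g x)"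
      by linarith
  qed
  also have "\<dots> < \<eta>" using K[of K] K[of "Suc K"] by simp
  finally have "sup_norm_on X (\<lambda>x. s (r (Suc K)) x - s (r K) x) < \<eta>" .
  moreover have "r K < r (Suc K)" using r by (simp add: strict_mono_def)
  ultimately show False using sH[of "r (Suc K)"] by force
qed

lemma cover_from_number:
  assumes X: "X \<noteq> {}" and B: "\<And>f x. f \<in> H \<Longrightarrow> x \<in> X \<Longrightarrow> \<bar>f x\<bar> \<le> B"
    and C: "compact_in_CX X H" and eta: "\<eta> > 0"
  shows "\<exists>F. finite F \<and> card F \<le> covering_number X H \<eta> \<and> F \<subseteq> H \<and>
        (\<forall>f\<in>H. \<exists>g\<in>F. sup_norm_on X (\<lambda>x. f x - g x) < \<eta>)"
proof -
  have "\<exists>F. finite F \<and> F \<subseteq> H \<and> (\<forall>f\<in>H. \<exists>g\<in>F. sup_norm_on X (\<lambda>x. f x - g x) < \<eta>)"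
    apply (rule finite_cover_exists[OF X])
    using B C eta by auto
  then obtain F where
    "finite F \<and> F \<subseteq> H \<and> (\<forall>f\<in>H. \<exists>g\<in>F. sup_norm_on X (\<lambda>x. f x - g x) < \<eta>)" by blast
  hence "\<exists>k F. finite F \<and> card F \<le> k \<and> F \<subseteq> H \<and> (\<forall>f\<in>H. \<exists>g\<in>F. sup_norm_on X (\<lambda>x. f x - g x) < \<eta>)"
    by blast
  thus ?thesis unfolding covering_number_def by (rule LeastI_ex)
qed

lemma final_algebra:
  fixes \<sigma> \<eta> r S n L t c M K' Kb D2 v Df lam b Lam :: real
  assumes Lam: "Lam \<ge> 0" and n: "n > 0" and r: "r \<ge> 0" and S: "S \<ge> 1" and lam: "lam > 0"
    and p1: "\<sigma> * \<eta> = r" and p2: "\<sigma> * S / n \<le> r" and p3: "lam\<^sup>2 * S / n \<le> r"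
    and p4: "Lam * S / n \<le> r\<^sup>2"
    and t: "t \<ge> ln 2" and c: "c \<ge> 0" and L: "0 < L" "L \<le> c * S + t"
    and M: "M \<ge> 0" and K': "K' \<ge> 0" and Kb: "Kb \<ge> 0"
    and b: "b = 8 * (M + 1) * \<sigma>" and \<sigma>: "\<sigma> > 0"
    and D2: "D2 \<ge> 0" and v: "v \<ge> 0"
    and hv: "v \<le> 4 * lam\<^sup>2 * D2 + 16 * M\<^sup>2 * K' * Lam"
    and hD: "D2 \<le> 2 * \<sigma> * \<eta> + 2 * (Kb * r) + (2 * sqrt (n * v * L) + 2 * b * L) / n"
    and hf: "Df \<le> 4 * \<sigma> * \<eta> + Kb * r + (2 * sqrt (n * v * L) + 2 * b * L) / n"
  shows "Df \<le> ((6 + 3 * Kb + 48 * (M + 1) * c + 32 * c + 32 * M * (K' + c)) / ln 2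
               + (48 * (M + 1) + 32 + 32 * M)) * t * r"
proof -
  define T where "T = c + t"
  have ln2: "ln 2 > (0::real)" by simp
  have t0: "t > 0" using t ln2 by linarith
  have T0: "T \<ge> 0" using c t0 by (simp add: T_def)
  have LT: "L \<le> T * S"
  proof -
    have "t \<le> t * S" using t0 S by simp
    thus ?thesis using L c by (simp add: T_def algebra_simps)
  qed
  define Y where "Y = sqrt (v * L / n)"
  have w: "(2 * sqrt (n * v * L) + 2 * b * L) / n = 2 * Y + 2 * (b * L / n)"
  proof -
    have "sqrt (n * v * L) / n = sqrt (v * L / n)"
      using n by (simp add: real_sqrt_divide real_sqrt_mult field_simps)
    thus ?thesis by (simp add: Y_def add_divide_distrib)
  qed
  define D where "D = sqrt D2"
  have D: "D \<ge> 0" "D\<^sup>2 = D2" using D2 by (auto simp: D_def)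
  define R1 where "R1 = 8 * (lam\<^sup>2 * L / n) + 8 * M * sqrt (K' * (Lam * L / n))"
  have Lpos: "L / n \<ge> 0" using L n by simp
  have Y1: "Y \<le> 2 * lam * D * sqrt (L / n) + 4 * M * sqrt (K' * (Lam * L / n))"
  proof -
    have "v * L / n \<le> (4 * lam\<^sup>2 * D2 + 16 * M\<^sup>2 * K' * Lam) * (L / n)"
      using mult_right_mono[OF hv Lpos] by (simp add: times_divide_eq_right)
    also have "\<dots> = (2 * lam * D * sqrt (L / n))\<^sup>2 + (4 * M * sqrt (K' * (Lam * L / n)))\<^sup>2"
    proof -
      have nn: "0 \<le> K' * (Lam * L / n)" using K' L n Lam by simp
      have s1: "(sqrt (K' * (Lam * L / n)))\<^sup>2 = K' * (Lam * L / n)"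
        using nn by simp
      have s2: "(sqrt (L / n))\<^sup>2 = L / n" using Lpos by simp
      show ?thesis unfolding power_mult_distrib s1 s2 using D by (simp add: algebra_simps)
    qed
    finally have "Y \<le> sqrt ((2 * lam * D * sqrt (L / n))\<^sup>2 + (4 * M * sqrt (K' * (Lam * L / n)))\<^sup>2)"
      unfolding Y_def by (rule real_sqrt_le_mono)
    also have "\<dots> \<le> \<bar>2 * lam * D * sqrt (L / n)\<bar> + \<bar>4 * M * sqrt (K' * (Lam * L / n))\<bar>"
      by (rule real_sqrt_sum_squares_triangle_ineq[of _ 0 0, simplified] | 
          metis real_sqrt_abs real_sqrt_le_mono sqrt_add_le_add_sqrt zero_le_power2)
    also have "\<dots> = 2 * lam * D * sqrt (L / n) + 4 * M * sqrt (K' * (Lam * L / n))"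
    proof -
      have "0 \<le> K' * (Lam * L / n)" using K' L n Lam by simp
      hence "0 \<le> sqrt (K' * (Lam * L / n))" by simp
      moreover have "0 \<le> sqrt (L / n)" using Lpos by simp
      ultimately show ?thesis using lam D M by simp
    qed
    finally show ?thesis .
  qed
  have amgm: "4 * lam * D * sqrt (L / n) \<le> D\<^sup>2 / 2 + 8 * (lam\<^sup>2 * L / n)"
  proof -
    obtain s where s: "s = sqrt (L / n)" by blast
    have s2: "s\<^sup>2 = L / n" using Lpos s by simp
    have "0 \<le> (D - 4 * lam * s)\<^sup>2" by simp
    hence "8 * lam * D * s \<le> D\<^sup>2 + 16 * lam\<^sup>2 * s\<^sup>2"
      by (simp add: power2_eq_square algebra_simps)
    thus ?thesis unfolding s[symmetric] s2 by simp
  qed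
  have Y2: "2 * Y \<le> D2 / 2 + R1" using Y1 amgm D by (simp add: R1_def)
  define A0 where "A0 = 2 * \<sigma> * \<eta> + 2 * (Kb * r) + 2 * (b * L / n)"
  have hD': "D2 \<le> A0 + 2 * Y" using hD w by (simp add: A0_def)
  have D2b: "D2 \<le> 2 * A0 + 2 * R1" using hD' Y2 by linarith
  have Yb: "2 * Y \<le> A0 + 2 * R1" using D2b Y2 by linarith
  have Dfb: "Df \<le> 4 * \<sigma> * \<eta> + Kb * r + 2 * (b * L / n) + A0 + 2 * R1"
    using hf w Yb by linarith
  have bL: "b * L / n \<le> 8 * (M + 1) * T * r"
  proof -
    have "b * L / n \<le> b * (T * S) / n" using LT b M \<sigma> n by (intro divide_right_mono mult_left_mono) auto
    also have "\<dots> = 8 * (M + 1) * T * (\<sigma> * S / n)" by (simp add: b)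
    also have "\<dots> \<le> 8 * (M + 1) * T * r" using p2 M T0 by (intro mult_left_mono) auto
    finally show ?thesis .
  qed
  have l2: "lam\<^sup>2 * L / n \<le> T * r"
  proof -
    have "lam\<^sup>2 * L / n \<le> lam\<^sup>2 * (T * S) / n" using LT n by (intro divide_right_mono mult_left_mono) auto
    also have "\<dots> = T * (lam\<^sup>2 * S / n)" by simp
    also have "\<dots> \<le> T * r" using p3 T0 by (intro mult_left_mono) auto
    finally show ?thesis .
  qed
  have l3: "sqrt (K' * (Lam * L / n)) \<le> (K' + T) * r"
  proof -
    have "Lam * L / n \<le> Lam * (T * S) / n"
      using LT n Lam by (intro divide_right_mono mult_left_mono) auto
    also have "\<dots> = T * (Lam * S / n)" by simp
    also have "\<dots> \<le> T * r\<^sup>2" using p4 T0 by (intro mult_left_mono) auto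
    finally have "K' * (Lam * L / n) \<le> K' * (T * r\<^sup>2)" using K' by (intro mult_left_mono) auto
    hence "sqrt (K' * (Lam * L / n)) \<le> sqrt (K' * T) * r"
      using r by (metis mult.assoc real_sqrt_abs real_sqrt_le_mono real_sqrt_mult abs_of_nonneg)
    also have "sqrt (K' * T) \<le> K' + T"
    proof -
      have "sqrt (K' * T) \<le> (K' + T) / 2" using K' T0 by (rule arith_geo_mean_sqrt)
      moreover have "(K' + T) / 2 \<le> K' + T" using K' T0 by simp
      ultimately show ?thesis by (rule order_trans)
    qed
    hence "sqrt (K' * T) * r \<le> (K' + T) * r" using r by (intro mult_right_mono) auto
    finally show ?thesis .
  qed
  have R1b: "R1 \<le> 8 * T * r + 8 * M * (K' + T) * r"
  proof -
    have "8 * (lam\<^sup>2 * L / n) \<le> 8 * (T * r)" using l2 by simp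
    moreover have "8 * M * sqrt (K' * (Lam * L / n)) \<le> 8 * M * ((K' + T) * r)"
      using l3 M by (intro mult_left_mono) auto
    ultimately show ?thesis unfolding R1_def by (simp add: algebra_simps)
  qed
  define Z1 where "Z1 = (M + 1) * T * r"
  define Z2 where "Z2 = T * r"
  define Z3 where "Z3 = M * (K' + T) * r"
  have e1: "8 * Z1 = 8 * (M + 1) * T * r" unfolding Z1_def by (simp only: mult.assoc)
  have e2: "8 * Z2 = 8 * T * r" unfolding Z2_def by (simp only: mult.assoc)
  have e3: "8 * Z3 = 8 * M * (K' + T) * r" unfolding Z3_def by (simp only: mult.assoc)
  have bL': "b * L / n \<le> 8 * Z1" using bL e1 by linarith
  have R1': "R1 \<le> 8 * Z2 + 8 * Z3" using R1b e2 e3 by linarith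
  have s4: "4 * \<sigma> * \<eta> = 4 * r" "2 * \<sigma> * \<eta> = 2 * r" using p1 by (simp_all add: mult.assoc)
  have Z10: "Z1 \<ge> 0" using M T0 r by (simp add: Z1_def)
  have "Df \<le> 6 * r + 3 * (Kb * r) + 48 * Z1 + 16 * Z2 + 16 * Z3"
  proof -
    obtain W where W: "W = b * L / n" by blast
    obtain Q where Q: "Q = \<sigma> * \<eta>" by blast
    obtain P where P: "P = Kb * r" by blast
    have "4 * \<sigma> * \<eta> = 4 * Q" "2 * \<sigma> * \<eta> = 2 * Q" by (simp_all add: Q)
    with Dfb R1' bL' s4 Z10 show ?thesis unfolding A0_def W[symmetric] P[symmetric] by linarith
  qed
  also have "\<dots> = 6 * r + 3 * Kb * r + 48 * (M + 1) * T * r + 16 * T * r + 16 * M * (K' + T) * r"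
    by (simp add: Z1_def Z2_def Z3_def mult.assoc)
  also have "\<dots> = (6 + 3 * Kb + 48 * (M + 1) * T + 16 * T + 16 * M * (K' + T)) * r"
    by (simp add: algebra_simps)
  also have "\<dots> \<le> ((6 + 3 * Kb + 48 * (M + 1) * c + 32 * c + 32 * M * (K' + c)) / ln 2
               + (48 * (M + 1) + 32 + 32 * M)) * t * r"
  proof -
    have one: "1 \<le> t / ln 2" using t ln2 by simp
    define P where "P = 6 + 3 * Kb + 48 * (M + 1) * c + 32 * c + 32 * M * (K' + c)"
    define Q where "Q = 48 * (M + 1) + 32 + 32 * M"
    have P0: "P \<ge> 0" using Kb M c K' by (simp add: P_def)
    have "6 + 3 * Kb + 48 * (M + 1) * T + 16 * T + 16 * M * (K' + T) \<le> P + Q * t"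
      using M c K' t0 by (simp add: P_def Q_def T_def algebra_simps)
    also have "\<dots> \<le> P * (t / ln 2) + Q * t" using mult_left_mono[OF one P0] by simp
    also have "\<dots> = (P / ln 2 + Q) * t" by (simp add: algebra_simps)
    finally show ?thesis using r unfolding P_def Q_def by (intro mult_right_mono) auto
  qed
  finally show ?thesis .
qed

lemma Phi_props:
  assumes e: "\<epsilon> > 0" and q: "q > 0"
  shows "Phi \<epsilon> q > 0"
    and "1 / Phi \<epsilon> q - q * (1 + \<epsilon>) \<ge> 1 + \<epsilon>"
    and "1 / Phi \<epsilon> q - q * (1 + \<epsilon>) \<ge> \<epsilon> * (3 + \<epsilon>) / (1 + \<epsilon>)"
proof -
  show "Phi \<epsilon> q > 0" using e q by (auto simp: Phi_def intro!: divide_pos_pos add_pos_pos mult_pos_pos)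
  show "1 / Phi \<epsilon> q - q * (1 + \<epsilon>) \<ge> 1 + \<epsilon>"
  proof (cases "\<epsilon> \<le> 1")
    case True thus ?thesis by (simp add: Phi_def algebra_simps)
  next
    case False
    have "1 / Phi \<epsilon> q - q * (1 + \<epsilon>) = \<epsilon> * (\<epsilon> + 3) / (1 + \<epsilon>)"
      using False e by (simp add: Phi_def field_simps power2_eq_square)
    also have "\<dots> \<ge> 1 + \<epsilon>" using False e by (simp add: field_simps power2_eq_square)
    finally show ?thesis .
  qed
  show "1 / Phi \<epsilon> q - q * (1 + \<epsilon>) \<ge> \<epsilon> * (3 + \<epsilon>) / (1 + \<epsilon>)"
  proof (cases "\<epsilon> \<le> 1")
    case True
    have "\<epsilon> * (3 + \<epsilon>) / (1 + \<epsilon>) \<le> 1 + \<epsilon>" using True e by (simp add: field_simps power2_eq_square)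
    thus ?thesis using True by (simp add: Phi_def algebra_simps)
  next
    case False
    have "1 / Phi \<epsilon> q - q * (1 + \<epsilon>) = \<epsilon> * (\<epsilon> + 3) / (1 + \<epsilon>)"
      using False e by (simp add: Phi_def field_simps power2_eq_square)
    thus ?thesis by (simp add: algebra_simps)
  qed
qed

lemma powr_sq: "(0::real) < x \<Longrightarrow> (x powr a)\<^sup>2 = x powr (2 * a)"
proof -
  have "x powr (2 * a) = x powr (a + a)" by (simp only: mult_2)
  also have "\<dots> = x powr a * x powr a" by (rule powr_add)
  finally show ?thesis by (simp add: power2_eq_square)
qed

lemma exponent_facts:
  fixes n :: nat and \<epsilon> q \<sigma> :: real
  assumes e: "\<epsilon> > 0" and q: "q > 0" and sig: "\<sigma> = real n powr Phi \<epsilon> q" and s1: "\<sigma> > 1"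
  defines "S \<equiv> \<sigma> powr (q * (1 + \<epsilon>))" and "lam \<equiv> \<sigma> powr (\<epsilon> / (1 + \<epsilon>))"
    and "r \<equiv> \<sigma> powr (- \<epsilon>)" and "\<eta> \<equiv> \<sigma> powr (- (1 + \<epsilon>))"
  shows "real n > 0" "S \<ge> 1" "lam > 0" "r \<ge> 0" "\<eta> > 0"
    "\<sigma> * \<eta> = r" "\<sigma> * S / real n \<le> r" "lam\<^sup>2 * S / real n \<le> r"
    "lam powr (1 - \<epsilon>) * S / real n \<le> r\<^sup>2"
    "\<sigma> powr (1 - \<epsilon>) * S / real n \<le> r\<^sup>2"
    "r = real n powr (- (\<epsilon> * Phi \<epsilon> q))"
    "\<eta> powr (- q) = S"
proof -
  note P = Phi_props[OF e q]
  define \<gamma> where "\<gamma> = 1 / Phi \<epsilon> q - q * (1 + \<epsilon>)"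
  have g1: "\<gamma> \<ge> 1 + \<epsilon>" and g2: "\<gamma> \<ge> \<epsilon> * (3 + \<epsilon>) / (1 + \<epsilon>)" using P by (auto simp: \<gamma>_def)
  show n0: "real n > 0" using s1 sig by (cases "n = 0") auto
  have s0: "\<sigma> > 0" using s1 by simp
  have nsig: "real n = \<sigma> powr (q * (1 + \<epsilon>) + \<gamma>)"
    using P(1) n0 by (simp add: sig \<gamma>_def powr_powr)
  have Sn: "S / real n = \<sigma> powr (- \<gamma>)"
    unfolding nsig S_def using s0 by (simp add: powr_add powr_minus divide_inverse)
  show "S \<ge> 1" unfolding S_def using s1 e q by (intro ge_one_powr_ge_zero) auto
  show "lam > 0" "r \<ge> 0" "\<eta> > 0" using s0 by (auto simp: lam_def r_def \<eta>_def)
  show "\<sigma> * \<eta> = r"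
  proof -
    have "\<sigma> powr (1 + - (1 + \<epsilon>)) = \<sigma> * \<eta>" unfolding \<eta>_def using s0 by (simp only: powr_add powr_one)
    thus ?thesis unfolding r_def by simp
  qed
  have mulSn: "\<sigma> powr a * S / real n = \<sigma> powr (a + - \<gamma>)" for a
  proof -
    have "\<sigma> powr a * S / real n = \<sigma> powr a * (S / real n)" by simp
    also have "\<dots> = \<sigma> powr (a + - \<gamma>)" by (simp only: Sn powr_add)
    finally show ?thesis .
  qed
  have mono: "\<sigma> powr a \<le> \<sigma> powr b" if "a \<le> b" for a b using s1 that by (intro powr_mono) auto
  show "\<sigma> * S / real n \<le> r"
  proof -
    have "\<sigma> * S / real n = \<sigma> * (S / real n)" by simp
    also have "\<dots> = \<sigma> powr (1 + - \<gamma>)" unfolding Sn using s0 by (simp only: powr_add powr_one)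
    finally have "\<sigma> * S / real n = \<sigma> powr (1 + - \<gamma>)" .
    also have "\<dots> \<le> r" unfolding r_def using g1 by (intro mono) auto
    finally show ?thesis .
  qed
  show "lam\<^sup>2 * S / real n \<le> r"
  proof -
    have "lam\<^sup>2 = \<sigma> powr (2 * (\<epsilon> / (1 + \<epsilon>)))" unfolding lam_def using s0 by (rule powr_sq)
    hence "lam\<^sup>2 * S / real n = \<sigma> powr (2 * (\<epsilon> / (1 + \<epsilon>)) + - \<gamma>)"
      by (simp only: mulSn)
    also have "\<dots> \<le> r" unfolding r_def
    proof (intro mono)
      have "2 * (\<epsilon> / (1 + \<epsilon>)) + \<epsilon> = \<epsilon> * (3 + \<epsilon>) / (1 + \<epsilon>)" using e by (simp add: field_simps)
      thus "2 * (\<epsilon> / (1 + \<epsilon>)) + - \<gamma> \<le> - \<epsilon>" using g2 by linarith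
    qed
    finally show ?thesis .
  qed
  show "lam powr (1 - \<epsilon>) * S / real n \<le> r\<^sup>2"
  proof -
    have "lam powr (1 - \<epsilon>) = \<sigma> powr (\<epsilon> / (1 + \<epsilon>) * (1 - \<epsilon>))" unfolding lam_def by (simp add: powr_powr)
    hence "lam powr (1 - \<epsilon>) * S / real n = \<sigma> powr (\<epsilon> / (1 + \<epsilon>) * (1 - \<epsilon>) + - \<gamma>)"
      by (simp only: mulSn)
    also have "\<dots> \<le> \<sigma> powr (2 * (- \<epsilon>))"
    proof (intro mono)
      have "\<epsilon> / (1 + \<epsilon>) * (1 - \<epsilon>) + 2 * \<epsilon> = \<epsilon> * (3 + \<epsilon>) / (1 + \<epsilon>)" using e by (simp add: field_simps)
      thus "\<epsilon> / (1 + \<epsilon>) * (1 - \<epsilon>) + - \<gamma> \<le> 2 * (- \<epsilon>)" using g2 by linarith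
    qed
    also have "\<dots> = r\<^sup>2" unfolding r_def using s0 by (simp add: powr_sq)
    finally show ?thesis .
  qed
  show "\<sigma> powr (1 - \<epsilon>) * S / real n \<le> r\<^sup>2"
  proof -
    have "\<sigma> powr (1 - \<epsilon>) * S / real n = \<sigma> powr (1 - \<epsilon> + - \<gamma>)"
      by (rule mulSn)
    also have "\<dots> \<le> \<sigma> powr (2 * (- \<epsilon>))" using g1 by (intro mono) auto
    also have "\<dots> = r\<^sup>2" unfolding r_def using s0 by (simp add: powr_sq)
    finally show ?thesis .
  qed
  show "r = real n powr (- (\<epsilon> * Phi \<epsilon> q))" unfolding r_def sig by (simp add: powr_powr mult.commute)
  show "\<eta> powr (- q) = S" unfolding \<eta>_def S_def by (simp add: powr_powr algebra_simps)
qed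

locale hsetup =
  fixes X :: "'a::euclidean_space set"
    and \<rho> :: "('a \<times> real) measure"
    and H :: "('a \<Rightarrow> real) set"
    and fstar :: "'a \<Rightarrow> real"
    and \<epsilon> q c :: real
  assumes X_compact: "compact X"
    and prob: "prob_space \<rho>"
    and sets_rho: "sets \<rho> = sets borel"
    and supp: "AE z in \<rho>. fst z \<in> X"
    and regr: "is_regression_function \<rho> X fstar"
    and fstar_bdd: "bounded (fstar ` X)"
    and H_CX: "subset_CX X H"
    and H_compact: "compact_in_CX X H"
    and H_bdd: "uniformly_bounded_on X H"
    and fstar_H: "fstar \<in> H"
    and eps_pos: "\<epsilon> > 0"
    and moment: "integrable \<rho> (\<lambda>z. \<bar>snd z\<bar> powr (1 + \<epsilon>))"
    and q_pos: "q > 0" and c_pos: "c > 0"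
    and entropy: "\<And>\<eta>. \<eta> > 0 \<Longrightarrow> ln (real (covering_number X H \<eta>)) \<le> c * \<eta> powr (- q)"
begin

sublocale prob_space \<rho> by (rule prob)

lemma meas[measurable]: "fst \<in> measurable \<rho> borel" "snd \<in> measurable \<rho> borel"
  by (simp_all add: meas_rho[OF sets_rho])

lemma sets_rho_prod: "sets \<rho> = sets (borel \<Otimes>\<^sub>M borel)"
  using sets_rho borel_prod by metis

lemma X_ne: "X \<noteq> {}"
proof
  assume "X = {}"
  with supp have "AE z in \<rho>. False" by simp
  thus False by (simp add: AE_False)
qed

lemma X_borel[measurable]: "X \<in> sets borel"
  using X_compact by (simp add: compact_imp_closed)

definition B0 where "B0 = (SOME B. \<forall>f\<in>H. \<forall>x\<in>X. \<bar>f x\<bar> \<le> B)"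

lemma B0: "f \<in> H \<Longrightarrow> x \<in> X \<Longrightarrow> \<bar>f x\<bar> \<le> B0"
  using someI_ex[OF H_bdd[unfolded uniformly_bounded_on_def]] unfolding B0_def by blast

definition MM where "MM = max (sup_norm_on X fstar) (SUP f\<in>H. sup_norm_on X f)"

lemma sup_norm_le_B0: "f \<in> H \<Longrightarrow> sup_norm_on X f \<le> B0"
  by (rule sup_norm_le[OF X_ne]) (rule B0)

lemma MM: "f \<in> H \<Longrightarrow> x \<in> X \<Longrightarrow> \<bar>f x\<bar> \<le> MM"
proof -
  assume f: "f \<in> H" and x: "x \<in> X"
  have "\<bar>f x\<bar> \<le> sup_norm_on X f" by (rule sup_norm_ge[OF B0[OF f] x])
  also have "\<dots> \<le> (SUP f\<in>H. sup_norm_on X f)"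
    using f sup_norm_le_B0 by (intro cSUP_upper) (auto intro!: bdd_aboveI2)
  also have "\<dots> \<le> MM" by (simp add: MM_def)
  finally show ?thesis .
qed

lemma MM0: "MM \<ge> 0"
proof -
  obtain x where "x \<in> X" using X_ne by blast
  thus ?thesis using MM[OF fstar_H] by (meson abs_ge_zero order_trans)
qed

definition ext :: "('a \<Rightarrow> real) \<Rightarrow> 'a \<Rightarrow> real" where
  "ext f x = indicator X x * f x"

lemma ext_meas[measurable]: "f \<in> H \<Longrightarrow> ext f \<in> borel_measurable borel"
  using borel_measurable_continuous_on_indicator[OF X_borel, of f] H_CX
  unfolding subset_CX_def ext_def by simp

lemma ext_bound: "f \<in> H \<Longrightarrow> \<bar>ext f x\<bar> \<le> MM"
  using MM MM0 by (auto simp: ext_def indicator_def)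

lemma ext_in: "x \<in> X \<Longrightarrow> ext f x = f x"
  by (simp add: ext_def)

lemma snd_int: "integrable \<rho> snd"
proof (rule Bochner_Integration.integrable_bound[of _ "\<lambda>z. 1 + \<bar>snd z\<bar> powr (1 + \<epsilon>)"])
  show "integrable \<rho> (\<lambda>z. 1 + \<bar>snd z\<bar> powr (1 + \<epsilon>))" using moment by simp
  have "norm (snd z) \<le> norm (1 + \<bar>snd z\<bar> powr (1 + \<epsilon>))" for z :: "'a \<times> real"
  proof (cases "\<bar>snd z\<bar> \<le> 1")
    case True
    have p: "0 \<le> \<bar>snd z\<bar> powr (1 + \<epsilon>)" by simp
    have "\<bar>snd z\<bar> \<le> 1 + \<bar>snd z\<bar> powr (1 + \<epsilon>)" using add_increasing2[OF p True] .
    thus ?thesis by simp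
  next
    case False
    hence "\<bar>snd z\<bar> powr 1 \<le> \<bar>snd z\<bar> powr (1 + \<epsilon>)" using eps_pos by (intro powr_mono) auto
    thus ?thesis using False by simp
  qed
  thus "AE z in \<rho>. norm (snd z) \<le> norm (1 + \<bar>snd z\<bar> powr (1 + \<epsilon>))" by simp
qed simp

definition Kmom where "Kmom = (LINT z|\<rho>. \<bar>snd z\<bar> powr (1 + \<epsilon>))"
definition Kmom2 where "Kmom2 = (LINT z|\<rho>. (\<bar>snd z\<bar> + MM) powr (1 + \<epsilon>))"

lemma Kmom0: "Kmom \<ge> 0" unfolding Kmom_def by (rule integral_nonneg_AE) simp

lemma mom2_int: "integrable \<rho> (\<lambda>z. (\<bar>snd z\<bar> + MM) powr (1 + \<epsilon>))"
proof (rule Bochner_Integration.integrable_bound[of _ "\<lambda>z. 2 powr (1 + \<epsilon>) * (\<bar>snd z\<bar> powr (1 + \<epsilon>) + MM powr (1 + \<epsilon>))"])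
  show "integrable \<rho> (\<lambda>z. 2 powr (1 + \<epsilon>) * (\<bar>snd z\<bar> powr (1 + \<epsilon>) + MM powr (1 + \<epsilon>)))"
    using moment by simp
  have "(\<bar>y\<bar> + MM) powr (1 + \<epsilon>) \<le> 2 powr (1 + \<epsilon>) * (\<bar>y\<bar> powr (1 + \<epsilon>) + MM powr (1 + \<epsilon>))" for y :: real
  proof -
    have "(\<bar>y\<bar> + MM) powr (1 + \<epsilon>) \<le> (2 * max \<bar>y\<bar> MM) powr (1 + \<epsilon>)"
      using MM0 eps_pos by (intro powr_mono2) auto
    also have "\<dots> = 2 powr (1 + \<epsilon>) * (max \<bar>y\<bar> MM) powr (1 + \<epsilon>)"
      using MM0 by (simp add: powr_mult)
    also have "(max \<bar>y\<bar> MM) powr (1 + \<epsilon>) \<le> \<bar>y\<bar> powr (1 + \<epsilon>) + MM powr (1 + \<epsilon>)"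
      by (simp add: max_def)
    finally show ?thesis by simp
  qed
  moreover have "0 \<le> \<bar>y\<bar> powr (1 + \<epsilon>) + MM powr (1 + \<epsilon>)" for y :: real by simp
  ultimately show "AE z in \<rho>. norm ((\<bar>snd z\<bar> + MM) powr (1 + \<epsilon>)) \<le>
      norm (2 powr (1 + \<epsilon>) * (\<bar>snd z\<bar> powr (1 + \<epsilon>) + MM powr (1 + \<epsilon>)))"
    using MM0 by (intro AE_I2) (simp add: abs_of_nonneg)
qed simp

lemma Kmom2_0: "Kmom2 \<ge> 0" unfolding Kmom2_def by (rule integral_nonneg_AE) simp


lemma huber_meas[measurable]: "huber s \<in> borel_measurable borel"
  unfolding huber_alt[abs_def] by measurable

definition xi :: "real \<Rightarrow> ('a \<Rightarrow> real) \<Rightarrow> 'a \<times> real \<Rightarrow> real" where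
  "xi s f z = huber s (snd z - ext f (fst z)) - huber s (snd z - ext fstar (fst z))"

definition Dsq :: "('a \<Rightarrow> real) \<Rightarrow> real" where
  "Dsq f = (LINT z|\<rho>. (ext f (fst z) - ext fstar (fst z))\<^sup>2)"

lemma xi_meas[measurable]: "f \<in> H \<Longrightarrow> xi s f \<in> borel_measurable \<rho>"
  unfolding xi_def using fstar_H by measurable

lemma ext_diff_bound: "f \<in> H \<Longrightarrow> g \<in> H \<Longrightarrow> \<bar>ext f x - ext g x\<bar> \<le> 2 * MM"
  using ext_bound[of f x] ext_bound[of g x] by linarith

lemma xi_abs:
  assumes f: "f \<in> H" and s: "s > 0"
  shows "\<bar>xi s f z\<bar> \<le> 2 * \<bar>ext f (fst z) - ext fstar (fst z)\<bar> * min (\<bar>snd z\<bar> + MM) s"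
proof -
  define a where "a = snd z - ext f (fst z)"
  define b where "b = snd z - ext fstar (fst z)"
  have a: "\<bar>a\<bar> \<le> \<bar>snd z\<bar> + MM" unfolding a_def using ext_bound[OF f, of "fst z"] by linarith
  have b: "\<bar>b\<bar> \<le> \<bar>snd z\<bar> + MM" unfolding b_def using ext_bound[OF fstar_H, of "fst z"] by linarith
  have m: "max (min \<bar>a\<bar> s) (min \<bar>b\<bar> s) \<le> min (\<bar>snd z\<bar> + MM) s" using a b by (auto simp: max_def min_def)
  have "\<bar>xi s f z\<bar> \<le> 2 * \<bar>a - b\<bar> * max (min \<bar>a\<bar> s) (min \<bar>b\<bar> s)"
    unfolding xi_def a_def[symmetric] b_def[symmetric] by (rule huber_lip[OF s])
  also have "\<dots> \<le> 2 * \<bar>a - b\<bar> * min (\<bar>snd z\<bar> + MM) s"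
    by (rule mult_left_mono[OF m]) simp
  also have "\<bar>a - b\<bar> = \<bar>ext f (fst z) - ext fstar (fst z)\<bar>" unfolding a_def b_def by linarith
  finally show ?thesis .
qed

lemma xi_bound:
  assumes f: "f \<in> H" and s: "s > 0"
  shows "\<bar>xi s f z\<bar> \<le> 4 * MM * s"
proof -
  have "\<bar>xi s f z\<bar> \<le> 2 * \<bar>ext f (fst z) - ext fstar (fst z)\<bar> * min (\<bar>snd z\<bar> + MM) s"
    by (rule xi_abs[OF f s])
  also have "\<dots> \<le> 2 * (2 * MM) * s"
    using ext_diff_bound[OF f fstar_H, of "fst z"] s MM0
    by (intro mult_mono) auto
  finally show ?thesis by simp
qed

lemma xi_diff:
  assumes f: "f \<in> H" and g: "g \<in> H" and s: "s > 0"
  shows "xi s f z \<le> xi s g z + 2 * s * \<bar>ext f (fst z) - ext g (fst z)\<bar>"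
proof -
  define a where "a = snd z - ext f (fst z)"
  define b where "b = snd z - ext g (fst z)"
  have "\<bar>huber s a - huber s b\<bar> \<le> 2 * \<bar>a - b\<bar> * max (min \<bar>a\<bar> s) (min \<bar>b\<bar> s)"
    by (rule huber_lip[OF s])
  also have "\<dots> \<le> 2 * \<bar>a - b\<bar> * s" by (intro mult_left_mono) auto
  also have "\<bar>a - b\<bar> = \<bar>ext f (fst z) - ext g (fst z)\<bar>" unfolding a_def b_def by linarith
  finally have "\<bar>huber s a - huber s b\<bar> \<le> 2 * s * \<bar>ext f (fst z) - ext g (fst z)\<bar>" by (simp add: mult_ac)
  thus ?thesis unfolding xi_def a_def[symmetric] b_def[symmetric] by linarith
qed

lemma xi_int: "f \<in> H \<Longrightarrow> s > 0 \<Longrightarrow> integrable \<rho> (xi s f)"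
  by (rule integrable_const_bound[where B="4 * MM * s"]) (auto intro!: AE_I2 xi_bound)

lemma xi2_int: "f \<in> H \<Longrightarrow> s > 0 \<Longrightarrow> integrable \<rho> (\<lambda>z. (xi s f z)\<^sup>2)"
proof (rule integrable_const_bound[where B="(4 * MM * s)\<^sup>2"])
  assume "f \<in> H" "s > 0"
  have "(xi s f z)\<^sup>2 \<le> (4 * MM * s)\<^sup>2" for z
    using power_mono[OF xi_bound[OF \<open>f \<in> H\<close> \<open>s > 0\<close>, of z] abs_ge_zero, of 2] by simp
  thus "AE z in \<rho>. norm ((xi s f z)\<^sup>2) \<le> (4 * MM * s)\<^sup>2" by (intro AE_I2) simp
qed simp

lemma Dsq_int: "f \<in> H \<Longrightarrow> integrable \<rho> (\<lambda>z. (ext f (fst z) - ext fstar (fst z))\<^sup>2)"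
proof (rule integrable_const_bound[where B="(2 * MM)\<^sup>2"])
  assume f: "f \<in> H"
  have "(ext f x - ext fstar x)\<^sup>2 \<le> (2 * MM)\<^sup>2" for x
    using power_mono[OF ext_diff_bound[OF f fstar_H, of x] abs_ge_zero, of 2] by simp
  thus "AE z in \<rho>. norm ((ext f (fst z) - ext fstar (fst z))\<^sup>2) \<le> (2 * MM)\<^sup>2" by (intro AE_I2) simp
  show "(\<lambda>z. (ext f (fst z) - ext fstar (fst z))\<^sup>2) \<in> borel_measurable \<rho>" using f fstar_H by measurable
qed

lemma Dsq0: "Dsq f \<ge> 0" unfolding Dsq_def by (rule integral_nonneg_AE) simp

lemma Dsq_LINT: assumes f: "f \<in> H"
  shows "(LINT x:X|distr \<rho> borel fst. (f x - fstar x)\<^sup>2) = Dsq f"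
proof -
  have "(LINT x:X|distr \<rho> borel fst. (f x - fstar x)\<^sup>2) = integral\<^sup>L (distr \<rho> borel fst) (\<lambda>x. (ext f x - ext fstar x)\<^sup>2)"
    unfolding set_lebesgue_integral_def
    by (intro Bochner_Integration.integral_cong) (auto simp: ext_def indicator_def)
  also have "\<dots> = Dsq f" unfolding Dsq_def using f fstar_H by (subst integral_distr) auto
  finally show ?thesis .
qed

lemma tail_bound:
  assumes s: "2 * MM < s"
  shows "max (\<bar>y\<bar> + MM - s) 0 \<le> \<bar>y\<bar> powr (1 + \<epsilon>) * (s / 2) powr (- \<epsilon>)"
proof (cases "\<bar>y\<bar> \<le> s / 2")
  case True
  hence "\<bar>y\<bar> + MM - s \<le> 0" using s by linarith
  thus ?thesis by simp
next
  case False
  have s0: "s / 2 > 0" using s MM0 by linarith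
  have y0: "\<bar>y\<bar> > 0" using False s0 by linarith
  have "\<bar>y\<bar> + MM - s \<le> \<bar>y\<bar>" using s MM0 by linarith
  also have "\<bar>y\<bar> = \<bar>y\<bar> * ((s / 2) powr \<epsilon> * (s / 2) powr (- \<epsilon>))"
    using s0 by (simp add: powr_minus)
  also have "\<dots> \<le> \<bar>y\<bar> * (\<bar>y\<bar> powr \<epsilon> * (s / 2) powr (- \<epsilon>))"
    using False s0 eps_pos by (intro mult_left_mono mult_right_mono powr_mono2) auto
  also have "\<dots> = \<bar>y\<bar> powr (1 + \<epsilon>) * (s / 2) powr (- \<epsilon>)"
    using y0 by (simp add: powr_add)
  finally show ?thesis using y0 s0 by simp
qed

lemma ext_inter: "indicator (A \<inter> X) x * fstar x = indicator A x * ext fstar x"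
  by (simp add: ext_def indicator_inter_arith)

lemma phi_int: "integrable \<rho> (\<lambda>z. snd z - ext fstar (fst z))"
proof -
  have "integrable \<rho> (\<lambda>z. ext fstar (fst z))"
    by (rule integrable_const_bound[where B=MM]) (use ext_bound[OF fstar_H] fstar_H in auto)
  thus ?thesis using snd_int by auto
qed

lemma phi_zero:
  assumes A: "A \<in> sets borel"
  shows "(LINT z|\<rho>. indicator A (fst z) * (snd z - ext fstar (fst z))) = 0"
proof -
  have i1: "integrable \<rho> (\<lambda>z. indicator A (fst z) * snd z)"
    by (rule Bochner_Integration.integrable_bound[OF integrable_abs[OF snd_int]])
       (use A in \<open>auto simp: indicator_def\<close>)
  have i2: "integrable \<rho> (\<lambda>z. indicator A (fst z) * ext fstar (fst z))"
    by (rule integrable_const_bound[where B=MM])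
       (use ext_bound[OF fstar_H] fstar_H A MM0 in \<open>auto simp: indicator_def abs_mult\<close>)
  have "(LINT z|\<rho>. indicator A (fst z) * (snd z - ext fstar (fst z)))
      = (LINT z|\<rho>. indicator A (fst z) * snd z) - (LINT z|\<rho>. indicator A (fst z) * ext fstar (fst z))"
    using i1 i2 by (simp add: right_diff_distrib)
  also have "(LINT z|\<rho>. indicator A (fst z) * snd z) = (LINT z|\<rho>. indicator (A \<inter> X) (fst z) * fstar (fst z))"
    using regr A unfolding is_regression_function_def by blast
  also have "\<dots> = (LINT z|\<rho>. indicator A (fst z) * ext fstar (fst z))"
    by (simp add: ext_inter)
  finally show ?thesis by simp
qed

lemma xi_expect:
  assumes f: "f \<in> H" and s: "2 * MM < s" "0 < s"
  shows "\<bar>(LINT z|\<rho>. xi s f z) - Dsq f\<bar> \<le> 4 * MM * Kmom * (s / 2) powr (- \<epsilon>)"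
proof -
  define g where "g = (\<lambda>x. ext fstar x - ext f x)"
  define \<phi> where "\<phi> = (\<lambda>z. snd z - ext fstar (fst z))"
  have gm[measurable]: "g \<in> borel_measurable borel" unfolding g_def using f fstar_H by measurable
  have gb: "\<bar>g x\<bar> \<le> 2 * MM" for x unfolding g_def using ext_diff_bound[OF fstar_H f] .
  have z: "(LINT z|\<rho>. g (fst z) * \<phi> z) = 0"
    unfolding \<phi>_def by (rule zero_integral_ext[OF prob sets_rho phi_int phi_zero gm gb])
  have gphi_int: "integrable \<rho> (\<lambda>z. g (fst z) * \<phi> z)"
  proof (rule Bochner_Integration.integrable_bound[of _ "\<lambda>z. (2 * MM) * \<phi> z"])
    show "integrable \<rho> (\<lambda>z. 2 * MM * \<phi> z)" unfolding \<phi>_def using phi_int by simp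
    have "norm (g (fst z) * \<phi> z) \<le> norm (2 * MM * \<phi> z)" for z
      using gb[of "fst z"] MM0 by (simp add: abs_mult mult_right_mono)
    thus "AE z in \<rho>. norm (g (fst z) * \<phi> z) \<le> norm (2 * MM * \<phi> z)" by simp
    show "(\<lambda>z. g (fst z) * \<phi> z) \<in> borel_measurable \<rho>" unfolding \<phi>_def using fstar_H by measurable
  qed
  define sqd where "sqd = (\<lambda>z. 2 * (g (fst z) * \<phi> z) + (ext f (fst z) - ext fstar (fst z))\<^sup>2)"
  have sqd_eq: "sqd z = (snd z - ext f (fst z))\<^sup>2 - (snd z - ext fstar (fst z))\<^sup>2" for z
    unfolding sqd_def g_def \<phi>_def by (simp add: power2_eq_square algebra_simps)
  have sqd_int: "integrable \<rho> sqd" unfolding sqd_def using gphi_int Dsq_int[OF f] by simp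
  have E_sqd: "(LINT z|\<rho>. sqd z) = Dsq f"
    unfolding sqd_def using gphi_int Dsq_int[OF f] z by (simp add: Dsq_def)
  define rem where "rem = (\<lambda>z. xi s f z - sqd z)"
  have rem_bound: "\<bar>rem z\<bar> \<le> 4 * MM * (\<bar>snd z\<bar> powr (1 + \<epsilon>) * (s / 2) powr (- \<epsilon>))" for z
  proof -
    define a where "a = snd z - ext f (fst z)"
    define b where "b = snd z - ext fstar (fst z)"
    have ab: "\<bar>a - b\<bar> \<le> 2 * MM" unfolding a_def b_def using ext_diff_bound[OF fstar_H f, of "fst z"] by simp
    have a: "\<bar>a\<bar> \<le> \<bar>snd z\<bar> + MM" unfolding a_def using ext_bound[OF f, of "fst z"] by linarith
    have b: "\<bar>b\<bar> \<le> \<bar>snd z\<bar> + MM" unfolding b_def using ext_bound[OF fstar_H, of "fst z"] by linarith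
    have m: "max (max (\<bar>a\<bar> - s) (\<bar>b\<bar> - s)) 0 \<le> max (\<bar>snd z\<bar> + MM - s) 0"
      using a b by (auto simp: max_def)
    have "\<bar>rem z\<bar> = \<bar>(huber s a - huber s b) - (a\<^sup>2 - b\<^sup>2)\<bar>"
      unfolding rem_def xi_def sqd_eq a_def b_def ..
    also have "\<dots> \<le> 2 * \<bar>a - b\<bar> * max (max (\<bar>a\<bar> - s) (\<bar>b\<bar> - s)) 0" by (rule huber_sq_diff)
    also have "\<dots> \<le> 2 * (2 * MM) * (\<bar>snd z\<bar> powr (1 + \<epsilon>) * (s / 2) powr (- \<epsilon>))"
    proof -
      have m2: "max (max (\<bar>a\<bar> - s) (\<bar>b\<bar> - s)) 0 \<le> \<bar>snd z\<bar> powr (1 + \<epsilon>) * (s / 2) powr (- \<epsilon>)"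
        using order_trans[OF m tail_bound[OF s(1), of "snd z"]] .
      show ?thesis using ab m2 MM0 by (intro mult_mono) auto
    qed
    finally show ?thesis by simp
  qed
  have rem_int: "integrable \<rho> rem" unfolding rem_def using xi_int[OF f s(2)] sqd_int by simp
  have "(LINT z|\<rho>. xi s f z) = (LINT z|\<rho>. sqd z) + (LINT z|\<rho>. rem z)"
    using sqd_int xi_int[OF f s(2)] unfolding rem_def by (simp add: Bochner_Integration.integral_diff)
  hence "\<bar>(LINT z|\<rho>. xi s f z) - Dsq f\<bar> = \<bar>LINT z|\<rho>. rem z\<bar>" using E_sqd by simp
  also have "\<dots> \<le> (LINT z|\<rho>. \<bar>rem z\<bar>)" by (rule integral_abs_bound)
  also have "\<dots> \<le> (LINT z|\<rho>. 4 * MM * (\<bar>snd z\<bar> powr (1 + \<epsilon>) * (s / 2) powr (- \<epsilon>)))"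
    by (rule integral_mono) (use rem_int moment rem_bound in auto)
  also have "\<dots> = 4 * MM * Kmom * (s / 2) powr (- \<epsilon>)"
    by (simp add: Kmom_def)
  finally show ?thesis .
qed

lemma sq_W1:
  assumes W: "0 \<le> W" "W \<le> s" "W \<le> Y" and e: "\<epsilon> \<le> 1"
  shows "W\<^sup>2 \<le> Y powr (1 + \<epsilon>) * s powr (1 - \<epsilon>)"
proof (cases "W = 0")
  case True thus ?thesis by simp
next
  case False
  hence W0: "W > 0" using W by simp
  have "W\<^sup>2 = W powr (1 + \<epsilon>) * W powr (1 - \<epsilon>)" using W0
    by (simp add: powr_add[symmetric] power2_eq_square)
  also have "\<dots> \<le> Y powr (1 + \<epsilon>) * s powr (1 - \<epsilon>)"
    using W W0 e eps_pos by (intro mult_mono powr_mono2) auto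
  finally show ?thesis .
qed

lemma sq_W2:
  assumes W: "0 \<le> W" "W \<le> Y" and e: "\<epsilon> > 1" and l: "lam > 0"
  shows "W\<^sup>2 \<le> lam\<^sup>2 + Y powr (1 + \<epsilon>) * lam powr (1 - \<epsilon>)"
proof (cases "W \<le> lam")
  case True
  hence "W\<^sup>2 \<le> lam\<^sup>2" using W by (intro power_mono) auto
  moreover have "0 \<le> Y powr (1 + \<epsilon>) * lam powr (1 - \<epsilon>)" by simp
  ultimately show ?thesis by linarith
next
  case False
  hence W0: "W > 0" using l by simp
  have "W\<^sup>2 = W powr (1 + \<epsilon>) * W powr (1 - \<epsilon>)" using W0
    by (simp add: powr_add[symmetric] power2_eq_square)
  also have "\<dots> \<le> Y powr (1 + \<epsilon>) * lam powr (1 - \<epsilon>)"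
  proof (intro mult_mono)
    show "W powr (1 + \<epsilon>) \<le> Y powr (1 + \<epsilon>)" using W eps_pos by (intro powr_mono2) auto
    show "W powr (1 - \<epsilon>) \<le> lam powr (1 - \<epsilon>)" using False l e by (intro powr_mono2') auto
  qed auto
  finally have "W\<^sup>2 \<le> Y powr (1 + \<epsilon>) * lam powr (1 - \<epsilon>)" .
  thus ?thesis using zero_le_power2[of lam] by linarith
qed

lemma xi_sq_pw:
  assumes f: "f \<in> H" and s: "0 < s"
  shows "(xi s f z)\<^sup>2 \<le> 4 * (ext f (fst z) - ext fstar (fst z))\<^sup>2 * (min (\<bar>snd z\<bar> + MM) s)\<^sup>2"
proof -
  have "(xi s f z)\<^sup>2 = \<bar>xi s f z\<bar>\<^sup>2" by simp
  also have "\<dots> \<le> (2 * \<bar>ext f (fst z) - ext fstar (fst z)\<bar> * min (\<bar>snd z\<bar> + MM) s)\<^sup>2"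
    by (rule power_mono[OF xi_abs[OF f s]]) simp
  also have "\<dots> = 4 * (ext f (fst z) - ext fstar (fst z))\<^sup>2 * (min (\<bar>snd z\<bar> + MM) s)\<^sup>2"
    by (simp add: power_mult_distrib)
  finally show ?thesis .
qed

lemma xi_var1:
  assumes f: "f \<in> H" and s: "0 < s" and e: "\<epsilon> \<le> 1"
  shows "(LINT z|\<rho>. (xi s f z)\<^sup>2) \<le> 16 * MM\<^sup>2 * Kmom2 * s powr (1 - \<epsilon>)"
proof -
  have pw: "(xi s f z)\<^sup>2 \<le> 16 * MM\<^sup>2 * ((\<bar>snd z\<bar> + MM) powr (1 + \<epsilon>) * s powr (1 - \<epsilon>))" for z
  proof -
    have W: "(min (\<bar>snd z\<bar> + MM) s)\<^sup>2 \<le> (\<bar>snd z\<bar> + MM) powr (1 + \<epsilon>) * s powr (1 - \<epsilon>)"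
      by (rule sq_W1[OF _ _ _ e]) (use MM0 s in auto)
    have G: "(ext f (fst z) - ext fstar (fst z))\<^sup>2 \<le> (2 * MM)\<^sup>2"
      using power_mono[OF ext_diff_bound[OF f fstar_H, of "fst z"] abs_ge_zero, of 2] by simp
    have "(xi s f z)\<^sup>2 \<le> 4 * (ext f (fst z) - ext fstar (fst z))\<^sup>2 * (min (\<bar>snd z\<bar> + MM) s)\<^sup>2"
      by (rule xi_sq_pw[OF f s])
    also have "\<dots> \<le> 4 * (2 * MM)\<^sup>2 * ((\<bar>snd z\<bar> + MM) powr (1 + \<epsilon>) * s powr (1 - \<epsilon>))"
      using G W by (intro mult_mono mult_left_mono) auto
    finally show ?thesis by (simp add: power_mult_distrib)
  qed
  have "(LINT z|\<rho>. (xi s f z)\<^sup>2) \<le> (LINT z|\<rho>. 16 * MM\<^sup>2 * ((\<bar>snd z\<bar> + MM) powr (1 + \<epsilon>) * s powr (1 - \<epsilon>)))"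
    by (rule integral_mono) (use xi2_int[OF f s] mom2_int pw in auto)
  also have "\<dots> = 16 * MM\<^sup>2 * Kmom2 * s powr (1 - \<epsilon>)" by (simp add: Kmom2_def)
  finally show ?thesis .
qed

lemma xi_var2:
  assumes f: "f \<in> H" and s: "0 < s" and e: "\<epsilon> > 1" and l: "lam > 0"
  shows "(LINT z|\<rho>. (xi s f z)\<^sup>2) \<le> 4 * lam\<^sup>2 * Dsq f + 16 * MM\<^sup>2 * Kmom2 * lam powr (1 - \<epsilon>)"
proof -
  have pw: "(xi s f z)\<^sup>2 \<le> 4 * lam\<^sup>2 * (ext f (fst z) - ext fstar (fst z))\<^sup>2
      + 16 * MM\<^sup>2 * ((\<bar>snd z\<bar> + MM) powr (1 + \<epsilon>) * lam powr (1 - \<epsilon>))" for z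
  proof -
    define G where "G = (ext f (fst z) - ext fstar (fst z))\<^sup>2"
    define P where "P = (\<bar>snd z\<bar> + MM) powr (1 + \<epsilon>) * lam powr (1 - \<epsilon>)"
    have W: "(min (\<bar>snd z\<bar> + MM) s)\<^sup>2 \<le> lam\<^sup>2 + P"
      unfolding P_def by (rule sq_W2[OF _ _ e l]) (use MM0 s in auto)
    have G: "G \<le> (2 * MM)\<^sup>2"
      using power_mono[OF ext_diff_bound[OF f fstar_H, of "fst z"] abs_ge_zero, of 2] by (simp add: G_def)
    have G0: "0 \<le> G" by (simp add: G_def)
    have P0: "0 \<le> P" by (simp add: P_def)
    have "(xi s f z)\<^sup>2 \<le> 4 * G * (min (\<bar>snd z\<bar> + MM) s)\<^sup>2"
      unfolding G_def by (rule xi_sq_pw[OF f s])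
    also have "\<dots> \<le> 4 * G * (lam\<^sup>2 + P)" using W G0 by (intro mult_left_mono) auto
    also have "\<dots> = 4 * lam\<^sup>2 * G + 4 * G * P" by (simp add: algebra_simps)
    also have "4 * G * P \<le> 4 * (2 * MM)\<^sup>2 * P" using G P0 by (intro mult_right_mono) auto
    finally show ?thesis by (simp add: G_def P_def power_mult_distrib)
  qed
  have "(LINT z|\<rho>. (xi s f z)\<^sup>2) \<le> (LINT z|\<rho>. 4 * lam\<^sup>2 * (ext f (fst z) - ext fstar (fst z))\<^sup>2
      + 16 * MM\<^sup>2 * ((\<bar>snd z\<bar> + MM) powr (1 + \<epsilon>) * lam powr (1 - \<epsilon>)))"
    by (rule integral_mono) (use xi2_int[OF f s] mom2_int Dsq_int[OF f] pw in auto)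
  also have "\<dots> = 4 * lam\<^sup>2 * Dsq f + 16 * MM\<^sup>2 * Kmom2 * lam powr (1 - \<epsilon>)"
    using mom2_int Dsq_int[OF f] by (simp add: Kmom2_def Dsq_def)
  finally show ?thesis .
qed

lemma integral_const_prob: "(LINT z|\<rho>. (a::real)) = a"
  by (simp add: prob_space)

lemma bad_event:
  fixes n :: nat
  assumes j: "j \<in> H" and s: "0 < s" and L: "0 < L"
  defines "BB \<equiv> {\<omega> \<in> space (PiM {..<n} (\<lambda>_. \<rho>)). (\<Sum>i<n. (LINT z|\<rho>. xi s j z) - xi s j (\<omega> i))
            \<ge> 2 * sqrt (real n * (LINT z|\<rho>. (xi s j z)\<^sup>2) * L) + 2 * (8 * (MM + 1) * s) * L}"
  shows "BB \<in> sets (PiM {..<n} (\<lambda>_. \<rho>))"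
    and "measure (PiM {..<n} (\<lambda>_. \<rho>)) BB \<le> exp (- L)"
proof -
  define E where "E = (LINT z|\<rho>. xi s j z)"
  define v where "v = (LINT z|\<rho>. (xi s j z)\<^sup>2)"
  define b where "b = 8 * (MM + 1) * s"
  define h where "h = (\<lambda>z. E - xi s j z)"
  have hm[measurable]: "h \<in> borel_measurable \<rho>" unfolding h_def using j by measurable
  have sm: "(\<lambda>\<omega>. \<Sum>i<n. h (\<omega> i)) \<in> borel_measurable (PiM {..<n} (\<lambda>_. \<rho>))"
  proof (rule borel_measurable_sum)
    fix i assume "i \<in> {..<n}"
    hence c: "(\<lambda>\<omega>. \<omega> i) \<in> measurable (PiM {..<n} (\<lambda>_. \<rho>)) \<rho>"
      by (intro measurable_component_singleton) auto
    show "(\<lambda>\<omega>. h (\<omega> i)) \<in> borel_measurable (PiM {..<n} (\<lambda>_. \<rho>))"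
      by (rule measurable_compose[OF c hm])
  qed
  show "BB \<in> sets (PiM {..<n} (\<lambda>_. \<rho>))"
    unfolding BB_def by measurable (auto intro!: j measurable_component_singleton)
  have Eb: "\<bar>E\<bar> \<le> 4 * MM * s"
  proof -
    have "\<bar>E\<bar> \<le> (LINT z|\<rho>. \<bar>xi s j z\<bar>)" unfolding E_def by (rule integral_abs_bound)
    also have "\<dots> \<le> (LINT z|\<rho>. 4 * MM * s)"
      by (rule integral_mono) (use xi_int[OF j s] xi_bound[OF j s] in auto)
    finally show ?thesis by (simp add: prob_space)
  qed
  have hb: "\<bar>h z\<bar> \<le> b" for z
  proof -
    have "\<bar>h z\<bar> \<le> \<bar>E\<bar> + \<bar>xi s j z\<bar>" unfolding h_def by linarith
    also have "\<dots> \<le> 4 * MM * s + 4 * MM * s" using Eb xi_bound[OF j s, of z] by linarith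
    also have "\<dots> \<le> b" unfolding b_def using s MM0 by (simp add: algebra_simps)
    finally show ?thesis .
  qed
  have b0: "b > 0" unfolding b_def using s MM0 by simp
  have xi_i: "integrable \<rho> (xi s j)" by (rule xi_int[OF j s])
  have h0: "integral\<^sup>L \<rho> h = 0"
    unfolding h_def using xi_i by (simp add: Bochner_Integration.integral_diff prob_space E_def)
  have hv: "integral\<^sup>L \<rho> (\<lambda>z. (h z)\<^sup>2) \<le> v"
  proof -
    have eq: "(h z)\<^sup>2 = E\<^sup>2 - 2 * E * xi s j z + (xi s j z)\<^sup>2" for z
      unfolding h_def by (simp add: power2_eq_square algebra_simps)
    have i2: "integrable \<rho> (\<lambda>z. (xi s j z)\<^sup>2)" by (rule xi2_int[OF j s])
    have "integral\<^sup>L \<rho> (\<lambda>z. (h z)\<^sup>2) = E\<^sup>2 - 2 * E * E + v"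
      unfolding eq using xi_i i2 by (simp add: E_def v_def prob_space)
    also have "\<dots> \<le> v" by (simp add: power2_eq_square)
    finally show ?thesis .
  qed
  have "measure (PiM {..<n} (\<lambda>_. \<rho>))
     {\<omega> \<in> space (PiM {..<n} (\<lambda>_. \<rho>)). (\<Sum>i<n. h (\<omega> i)) \<ge> 2 * sqrt (real n * v * L) + 2 * b * L}
     \<le> exp (- L)"
    by (rule bernstein_PiM[OF prob hm _ b0 h0 hv L]) (rule hb)
  thus "measure (PiM {..<n} (\<lambda>_. \<rho>)) BB \<le> exp (- L)"
    unfolding BB_def E_def[symmetric] v_def[symmetric] b_def[symmetric] by (simp add: h_def)
qed

lemma omega_X:
  fixes n :: nat
  defines "Om \<equiv> PiE {..<n} (\<lambda>_. {z \<in> space \<rho>. fst z \<in> X})"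
  shows "Om \<in> sets (PiM {..<n} (\<lambda>_. \<rho>))" "measure (PiM {..<n} (\<lambda>_. \<rho>)) Om = 1"
    "Om \<subseteq> space (PiM {..<n} (\<lambda>_. \<rho>))"
proof -
  interpret PP: product_prob_space "\<lambda>_. \<rho>" "{..<n}" by unfold_locales
  have S: "{z \<in> space \<rho>. fst z \<in> X} \<in> sets \<rho>" by measurable
  show "Om \<in> sets (PiM {..<n} (\<lambda>_. \<rho>))" unfolding Om_def by (rule sets_PiM_I_finite) (use S in auto)
  have p1: "prob {z \<in> space \<rho>. fst z \<in> X} = 1" using prob_Collect_eq_1[OF S] supp by simp
  have "emeasure (PiM {..<n} (\<lambda>_. \<rho>)) Om = (\<Prod>i\<in>{..<n}. emeasure \<rho> {z \<in> space \<rho>. fst z \<in> X})"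
    unfolding Om_def by (rule PP.emeasure_PiM) (use S in auto)
  also have "\<dots> = 1" using p1 by (simp add: emeasure_eq_measure)
  finally show "measure (PiM {..<n} (\<lambda>_. \<rho>)) Om = 1" by (simp add: measure_def)
  show "Om \<subseteq> space (PiM {..<n} (\<lambda>_. \<rho>))" unfolding Om_def space_PiM by (auto simp: PiE_def Pi_def)
qed
end

context hsetup begin

definition Kb where "Kb = 4 * MM * Kmom * 2 powr \<epsilon>"

definition Cfin where "Cfin = (6 + 3 * Kb + 48 * (MM + 1) * c + 32 * c + 32 * MM * (Kmom2 + c)) / ln 2
               + (48 * (MM + 1) + 32 + 32 * MM)"

lemma Kb0: "Kb \<ge> 0" unfolding Kb_def using MM0 Kmom0 by simp

lemma Cfin_pos: "Cfin > 0"
proof -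
  have "0 \<le> (6 + 3 * Kb + 48 * (MM + 1) * c + 32 * c + 32 * MM * (Kmom2 + c)) / ln 2"
    using Kb0 MM0 c_pos Kmom2_0 by simp
  moreover have "0 < 48 * (MM + 1) + 32 + 32 * MM" using MM0 by simp
  ultimately show ?thesis unfolding Cfin_def by linarith
qed

lemma bias_r: "s > 0 \<Longrightarrow> 4 * MM * Kmom * (s / 2) powr (- \<epsilon>) = Kb * s powr (- \<epsilon>)"
proof -
  assume s: "s > 0"
  have "(s / 2) powr (- \<epsilon>) = s powr (- \<epsilon>) / 2 powr (- \<epsilon>)" by (rule powr_divide)
  also have "2 powr (- \<epsilon>) = 1 / 2 powr \<epsilon>" by (simp add: powr_minus_divide)
  finally have "(s / 2) powr (- \<epsilon>) = s powr (- \<epsilon>) * 2 powr \<epsilon>" by simp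
  thus ?thesis unfolding Kb_def by (simp add: mult_ac)
qed

lemma det:
  fixes n :: nat and \<omega> :: "nat \<Rightarrow> 'a \<times> real"
  assumes n: "n > 0" and s: "0 < s" "2 * MM < s" and f: "f \<in> H" and j: "j \<in> H"
    and close: "\<And>x. \<bar>ext f x - ext j x\<bar> \<le> \<eta>"
    and inX: "\<And>i. i < n \<Longrightarrow> fst (\<omega> i) \<in> X"
    and erm: "emp_risk s n \<omega> f \<le> emp_risk s n \<omega> fstar"
    and notbad: "(\<Sum>i<n. (LINT z|\<rho>. xi s j z) - xi s j (\<omega> i)) < W"
  shows "Dsq j \<le> 2 * s * \<eta> + 2 * (Kb * s powr (- \<epsilon>)) + W / real n"
    and "Dsq f \<le> 4 * s * \<eta> + Kb * s powr (- \<epsilon>) + W / real n"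
proof -
  define Ej where "Ej = (LINT z|\<rho>. xi s j z)"
  define Ef where "Ef = (LINT z|\<rho>. xi s f z)"
  define r where "r = s powr (- \<epsilon>)"
  have n0: "real n > 0" using n by simp
  have s1: "(\<Sum>i<n. xi s f (\<omega> i)) \<le> 0"
  proof -
    have "(\<Sum>i<n. xi s f (\<omega> i)) = (\<Sum>i<n. huber s (snd (\<omega> i) - f (fst (\<omega> i))))
        - (\<Sum>i<n. huber s (snd (\<omega> i) - fstar (fst (\<omega> i))))"
      unfolding xi_def sum_subtractf[symmetric] by (intro sum.cong refl) (simp add: ext_in inX)
    also have "\<dots> = real n * (emp_risk s n \<omega> f - emp_risk s n \<omega> fstar)"
      unfolding emp_risk_def using n0 by (simp add: right_diff_distrib)
    also have "\<dots> \<le> 0" using erm n0 by (simp add: mult_nonneg_nonpos)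
    finally show ?thesis .
  qed
  have pj: "xi s j z \<le> xi s f z + 2 * s * \<eta>" for z
  proof -
    have "xi s j z \<le> xi s f z + 2 * s * \<bar>ext j (fst z) - ext f (fst z)\<bar>" by (rule xi_diff[OF j f s(1)])
    also have "\<bar>ext j (fst z) - ext f (fst z)\<bar> \<le> \<eta>" using close[of "fst z"] by linarith
    hence "2 * s * \<bar>ext j (fst z) - ext f (fst z)\<bar> \<le> 2 * s * \<eta>" using s by simp
    finally show ?thesis by simp
  qed
  have pf: "xi s f z \<le> xi s j z + 2 * s * \<eta>" for z
  proof -
    have "xi s f z \<le> xi s j z + 2 * s * \<bar>ext f (fst z) - ext j (fst z)\<bar>" by (rule xi_diff[OF f j s(1)])
    also have "2 * s * \<bar>ext f (fst z) - ext j (fst z)\<bar> \<le> 2 * s * \<eta>" using close[of "fst z"] s by simp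
    finally show ?thesis by simp
  qed
  have s2: "(\<Sum>i<n. xi s j (\<omega> i)) \<le> real n * (2 * s * \<eta>)"
  proof -
    have "(\<Sum>i<n. xi s j (\<omega> i)) \<le> (\<Sum>i<n. xi s f (\<omega> i) + 2 * s * \<eta>)"
      by (intro sum_mono pj)
    also have "\<dots> = (\<Sum>i<n. xi s f (\<omega> i)) + real n * (2 * s * \<eta>)" by (simp add: sum.distrib)
    finally show ?thesis using s1 by linarith
  qed
  have s3: "(\<Sum>i<n. Ej - xi s j (\<omega> i)) = real n * Ej - (\<Sum>i<n. xi s j (\<omega> i))"
    by (simp add: sum_subtractf)
  have "real n * Ej < W + real n * (2 * s * \<eta>)" using notbad s2 s3 unfolding Ej_def by linarith
  hence Ejb: "Ej < W / real n + 2 * s * \<eta>" using n0 by (simp add: field_simps)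
  have bj: "\<bar>Ej - Dsq j\<bar> \<le> Kb * r" unfolding Ej_def r_def using xi_expect[OF j s(2) s(1)] bias_r[OF s(1)] by simp
  have bf: "\<bar>Ef - Dsq f\<bar> \<le> Kb * r" unfolding Ef_def r_def using xi_expect[OF f s(2) s(1)] bias_r[OF s(1)] by simp
  have Efj: "Ef \<le> Ej + 2 * s * \<eta>"
  proof -
    have "Ef \<le> (LINT z|\<rho>. xi s j z + 2 * s * \<eta>)" unfolding Ef_def
      by (rule integral_mono) (use xi_int[OF f s(1)] xi_int[OF j s(1)] pf in auto)
    also have "\<dots> = Ej + 2 * s * \<eta>" unfolding Ej_def using xi_int[OF j s(1)] by (simp add: prob_space)
    finally show ?thesis .
  qed
  have Kr: "Kb * r \<ge> 0" using Kb0 by (simp add: r_def)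
  show "Dsq j \<le> 2 * s * \<eta> + 2 * (Kb * s powr (- \<epsilon>)) + W / real n"
    using Ejb bj Kr unfolding r_def by linarith
  show "Dsq f \<le> 4 * s * \<eta> + Kb * s powr (- \<epsilon>) + W / real n"
    using Ejb bf Efj unfolding r_def by linarith
qed


theorem main_loc:
  fixes n :: nat and \<delta> :: real
  assumes \<delta>: "0 < \<delta>" "\<delta> < 1"
    and sgt: "real n powr Phi \<epsilon> q > max (2 * MM) 1"
  shows "\<exists>A \<in> sets (PiM {..<n} (\<lambda>_. \<rho>)).
           measure (PiM {..<n} (\<lambda>_. \<rho>)) A \<ge> 1 - \<delta> \<and>
           (\<forall>z\<in>A. \<forall>f\<in>H. (\<forall>g\<in>H. emp_risk (real n powr Phi \<epsilon> q) n z f \<le> emp_risk (real n powr Phi \<epsilon> q) n z g) \<longrightarrow>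
              (LINT x:X|distr \<rho> borel fst. (f x - fstar x)\<^sup>2)
                \<le> Cfin * ln (2 / \<delta>) * real n powr (- (\<epsilon> * Phi \<epsilon> q)))"
proof -
  define \<sigma> where "\<sigma> = real n powr Phi \<epsilon> q"
  have s1: "\<sigma> > 1" and s2: "2 * MM < \<sigma>" using sgt by (auto simp: \<sigma>_def)
  have s0: "\<sigma> > 0" using s1 by simp
  define S where "S = \<sigma> powr (q * (1 + \<epsilon>))"
  define lam where "lam = \<sigma> powr (\<epsilon> / (1 + \<epsilon>))"
  define r where "r = \<sigma> powr (- \<epsilon>)"
  define \<eta> where "\<eta> = \<sigma> powr (- (1 + \<epsilon>))"
  note EF = exponent_facts[OF eps_pos q_pos \<sigma>_def s1, folded S_def lam_def r_def \<eta>_def]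
  have n0: "real n > 0" and S1: "S \<ge> 1" and lam0: "lam > 0" and r0: "r \<ge> 0" and eta0: "\<eta> > 0"
    and p1: "\<sigma> * \<eta> = r" and p2: "\<sigma> * S / real n \<le> r" and p3: "lam\<^sup>2 * S / real n \<le> r"
    and p4a: "lam powr (1 - \<epsilon>) * S / real n \<le> r\<^sup>2" and p4b: "\<sigma> powr (1 - \<epsilon>) * S / real n \<le> r\<^sup>2"
    and rn: "r = real n powr (- (\<epsilon> * Phi \<epsilon> q))" and etaS: "\<eta> powr (- q) = S"
    using EF by auto
  define Lam where "Lam = (if \<epsilon> \<le> 1 then \<sigma> powr (1 - \<epsilon>) else lam powr (1 - \<epsilon>))"
  have Lam0: "Lam \<ge> 0" by (simp add: Lam_def)
  have p4: "Lam * S / real n \<le> r\<^sup>2" using p4a p4b by (simp add: Lam_def)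
  have B0': "\<And>f x. f \<in> H \<Longrightarrow> x \<in> X \<Longrightarrow> \<bar>f x\<bar> \<le> B0" by (rule B0)
  have "\<exists>F. finite F \<and> card F \<le> covering_number X H \<eta> \<and> F \<subseteq> H \<and>
        (\<forall>f\<in>H. \<exists>g\<in>F. sup_norm_on X (\<lambda>x. f x - g x) < \<eta>)"
    apply (rule cover_from_number[OF X_ne])
    using B0' H_compact eta0 by auto
  then obtain F where Ffin: "finite F" and Fcard: "card F \<le> covering_number X H \<eta>" and FH: "F \<subseteq> H"
    and Fcov: "\<And>f. f \<in> H \<Longrightarrow> \<exists>g\<in>F. sup_norm_on X (\<lambda>x. f x - g x) < \<eta>" by blast
  have Fne: "F \<noteq> {}" using Fcov[OF fstar_H] by blast
  have card1: "real (card F) \<ge> 1" using Ffin Fne by (simp add: Suc_le_eq card_gt_0_iff)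
  define L where "L = ln (real (card F) / \<delta>)"
  define t where "t = ln (2 / \<delta>)"
  have L0: "L > 0"
  proof -
    have "1 < real (card F) / \<delta>" using card1 \<delta> by (simp add: less_divide_eq)
    thus ?thesis unfolding L_def by simp
  qed
  have t2: "t \<ge> ln 2" unfolding t_def using \<delta> by (simp add: divide_simps)
  have LS: "L \<le> c * S + t"
  proof -
    have "L = ln (real (card F)) + ln (1 / \<delta>)" unfolding L_def using card1 \<delta> by (simp add: ln_div)
    also have "ln (real (card F)) \<le> ln (real (covering_number X H \<eta>))"
      using card1 Fcard by simp
    also have "\<dots> \<le> c * \<eta> powr (- q)" by (rule entropy[OF eta0])
    also have "ln (1 / \<delta>) \<le> t" unfolding t_def using \<delta> by (simp add: divide_simps)
    finally show ?thesis using etaS by simp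
  qed
  let ?P = "PiM {..<n} (\<lambda>_. \<rho>)"
  interpret PP: product_prob_space "\<lambda>_. \<rho>" "{..<n}" by unfold_locales
  define BB where "BB = (\<lambda>j. {\<omega> \<in> space ?P. (\<Sum>i<n. (LINT z|\<rho>. xi \<sigma> j z) - xi \<sigma> j (\<omega> i))
            \<ge> 2 * sqrt (real n * (LINT z|\<rho>. (xi \<sigma> j z)\<^sup>2) * L) + 2 * (8 * (MM + 1) * \<sigma>) * L})"
  have BBs: "BB j \<in> sets ?P" if "j \<in> F" for j
  proof -
    have jH: "j \<in> H" using that FH by auto
    show ?thesis unfolding BB_def by (rule bad_event(1)[OF jH s0 L0])
  qed
  have BBm: "measure ?P (BB j) \<le> exp (- L)" if "j \<in> F" for j
  proof -
    have jH: "j \<in> H" using that FH by auto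
    show ?thesis unfolding BB_def by (rule bad_event(2)[OF jH s0 L0])
  qed
  define Om where "Om = PiE {..<n} (\<lambda>_. {z \<in> space \<rho>. fst z \<in> X})"
  note OX = omega_X[of n, folded Om_def]
  define U where "U = (\<Union>j\<in>F. BB j)"
  define A where "A = Om - U"
  have Us: "U \<in> sets ?P" unfolding U_def using BBs Ffin by auto
  have As: "A \<in> sets ?P" unfolding A_def using Us OX by auto
  have mU: "measure ?P U \<le> \<delta>"
  proof -
    have "measure ?P U \<le> (\<Sum>j\<in>F. measure ?P (BB j))" unfolding U_def
      by (rule measure_UNION_le[OF Ffin BBs])
    also have "\<dots> \<le> (\<Sum>j\<in>F. exp (- L))" by (intro sum_mono BBm)
    also have "\<dots> = real (card F) * exp (- L)" by simp
    also have "exp (- L) = \<delta> / real (card F)" unfolding L_def using card1 \<delta>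
      by (simp add: exp_minus exp_ln divide_simps)
    also have "real (card F) * (\<delta> / real (card F)) = \<delta>" using card1 by simp
    finally show ?thesis .
  qed
  have mA: "measure ?P A \<ge> 1 - \<delta>"
  proof -
    have "1 = measure ?P Om" using OX by simp
    also have "\<dots> \<le> measure ?P (A \<union> U)" unfolding A_def
      by (rule PP.P.finite_measure_mono) (use Us OX in auto)
    also have "\<dots> \<le> measure ?P A + measure ?P U" by (rule measure_Un_le[OF As Us])
    finally show ?thesis using mU by linarith
  qed
  show ?thesis
  proof (intro bexI[OF _ As] conjI mA ballI impI)
    fix z f assume zA: "z \<in> A" and f: "f \<in> H" and erm: "\<forall>g\<in>H. emp_risk (real n powr Phi \<epsilon> q) n z f \<le> emp_risk (real n powr Phi \<epsilon> q) n z g"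
    have erm': "emp_risk \<sigma> n z f \<le> emp_risk \<sigma> n z fstar" using erm fstar_H by (simp add: \<sigma>_def)
    have zOm: "z \<in> Om" and zU: "z \<notin> U" using zA by (auto simp: A_def)
    have zsp: "z \<in> space ?P" using zOm OX by auto
    have inX: "fst (z i) \<in> X" if "i < n" for i using zOm that by (auto simp: Om_def PiE_def Pi_def)
    obtain j where jF: "j \<in> F" and jc: "sup_norm_on X (\<lambda>x. f x - j x) < \<eta>" using Fcov[OF f] by blast
    have j: "j \<in> H" using jF FH by auto
    have close: "\<bar>ext f x - ext j x\<bar> \<le> \<eta>" for x
    proof (cases "x \<in> X")
      case True
      have "\<bar>f x - j x\<bar> \<le> sup_norm_on X (\<lambda>x. f x - j x)"
        by (rule sup_norm_ge[OF _ True, where B="2 * B0"]) (use B0[OF f] B0[OF j] in fastforce)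
      thus ?thesis using jc True by (simp add: ext_in)
    next
      case False thus ?thesis using eta0 by (simp add: ext_def)
    qed
    define v where "v = (LINT z|\<rho>. (xi \<sigma> j z)\<^sup>2)"
    define b where "b = 8 * (MM + 1) * \<sigma>"
    define W where "W = 2 * sqrt (real n * v * L) + 2 * b * L"
    have nb: "(\<Sum>i<n. (LINT z|\<rho>. xi \<sigma> j z) - xi \<sigma> j (z i)) < W"
      using zU jF zsp unfolding U_def BB_def W_def v_def b_def by (auto simp: not_le)
    have n1: "n > 0" using n0 by simp
    note D = det[OF n1 s0 s2 f j close inX erm' nb]
    have v0: "v \<ge> 0" unfolding v_def by (rule integral_nonneg_AE) simp
    have hv: "v \<le> 4 * lam\<^sup>2 * Dsq j + 16 * MM\<^sup>2 * Kmom2 * Lam"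
    proof (cases "\<epsilon> \<le> 1")
      case True
      have a: "v \<le> 16 * MM\<^sup>2 * Kmom2 * \<sigma> powr (1 - \<epsilon>)" unfolding v_def by (rule xi_var1[OF j s0 True])
      have b: "0 \<le> 4 * lam\<^sup>2 * Dsq j" using Dsq0[of j] by simp
      have LE: "Lam = \<sigma> powr (1 - \<epsilon>)" using True by (simp add: Lam_def)
      show ?thesis unfolding LE using a b by linarith
    next
      case False
      have "v \<le> 4 * lam\<^sup>2 * Dsq j + 16 * MM\<^sup>2 * Kmom2 * lam powr (1 - \<epsilon>)"
        unfolding v_def by (rule xi_var2[OF j s0 _ lam0]) (use False in simp)
      thus ?thesis using False by (simp add: Lam_def)
    qed
    have hD: "Dsq j \<le> 2 * \<sigma> * \<eta> + 2 * (Kb * r) + (2 * sqrt (real n * v * L) + 2 * b * L) / real n"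
      using D(1) unfolding W_def r_def .
    have hf: "Dsq f \<le> 4 * \<sigma> * \<eta> + Kb * r + (2 * sqrt (real n * v * L) + 2 * b * L) / real n"
      using D(2) unfolding W_def r_def .
    have "Dsq f \<le> Cfin * t * r"
      unfolding Cfin_def
      by (rule final_algebra[OF Lam0 n0 r0 S1 lam0 p1 p2 p3 p4 t2 _ L0 LS MM0 Kmom2_0 Kb0 b_def s0 Dsq0 v0 hv hD hf])
         (use c_pos in simp)
    thus "(LINT x:X|distr \<rho> borel fst. (f x - fstar x)\<^sup>2) \<le> Cfin * ln (2 / \<delta>) * real n powr (- (\<epsilon> * Phi \<epsilon> q))"
      using Dsq_LINT[OF f] by (simp add: t_def rn)
  qed
qed
end

theorem corollary1:
  fixes X :: "'a::euclidean_space set"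
    and \<rho> :: "('a \<times> real) measure"
    and H :: "('a \<Rightarrow> real) set"
    and fstar :: "'a \<Rightarrow> real"
    and \<epsilon> q c :: real
  assumes X_compact: "compact X"
    and prob: "prob_space \<rho>"
    and sets_rho: "sets \<rho> = sets borel"
    and supp: "AE z in \<rho>. fst z \<in> X"
    and regr: "is_regression_function \<rho> X fstar"
    and fstar_bdd: "bounded (fstar ` X)"
    and H_CX: "subset_CX X H"
    and H_compact: "compact_in_CX X H"
    and H_bdd: "uniformly_bounded_on X H"
    and fstar_H: "fstar \<in> H"
    and eps_pos: "\<epsilon> > 0"
    and moment: "integrable \<rho> (\<lambda>z. \<bar>snd z\<bar> powr (1 + \<epsilon>))"
    and q_pos: "q > 0" and c_pos: "c > 0"
    and entropy: "\<And>\<eta>. \<eta> > 0 \<Longrightarrow> ln (real (covering_number X H \<eta>)) \<le> c * \<eta> powr (- q)"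
  shows "\<exists>C>0. \<forall>n::nat. \<forall>\<delta>::real. 0 < \<delta> \<longrightarrow> \<delta> < 1 \<longrightarrow>
     (let \<sigma> = real n powr Phi \<epsilon> q;
          M = max (sup_norm_on X fstar) (SUP f\<in>H. sup_norm_on X f)
      in \<sigma> > max (2 * M) 1 \<longrightarrow>
        (\<exists>A \<in> sets (PiM {..<n} (\<lambda>_. \<rho>)).
           measure (PiM {..<n} (\<lambda>_. \<rho>)) A \<ge> 1 - \<delta> \<and>
           (\<forall>z\<in>A. \<forall>f\<in>H. (\<forall>g\<in>H. emp_risk \<sigma> n z f \<le> emp_risk \<sigma> n z g) \<longrightarrow>
              (LINT x:X|distr \<rho> borel fst. (f x - fstar x)\<^sup>2)
                \<le> C * ln (2 / \<delta>) * real n powr (- (\<epsilon> * Phi \<epsilon> q)))))"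
  proof -
  interpret hsetup X \<rho> H fstar \<epsilon> q c
    by (rule hsetup.intro; fact X_compact prob sets_rho supp regr fstar_bdd H_CX H_compact H_bdd
        fstar_H eps_pos moment q_pos c_pos entropy)
  show ?thesis
  proof (intro exI[of _ Cfin] conjI Cfin_pos allI impI)
    fix n :: nat and \<delta> :: real
    assume d1: "0 < \<delta>" and d2: "\<delta> < 1"
    show "let \<sigma> = real n powr Phi \<epsilon> q;
          M = max (sup_norm_on X fstar) (SUP f\<in>H. sup_norm_on X f)
      in \<sigma> > max (2 * M) 1 \<longrightarrow>
        (\<exists>A \<in> sets (PiM {..<n} (\<lambda>_. \<rho>)).
           measure (PiM {..<n} (\<lambda>_. \<rho>)) A \<ge> 1 - \<delta> \<and>
           (\<forall>z\<in>A. \<forall>f\<in>H. (\<forall>g\<in>H. emp_risk \<sigma> n z f \<le> emp_risk \<sigma> n z g) \<longrightarrow>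
              (LINT x:X|distr \<rho> borel fst. (f x - fstar x)\<^sup>2)
                \<le> Cfin * ln (2 / \<delta>) * real n powr (- (\<epsilon> * Phi \<epsilon> q))))"
      unfolding Let_def MM_def[symmetric] using main_loc[OF d1 d2] by blast
  qed
qed

end
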